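(* Fix an equation $(f,q,w)$ as in the context with $\prod_{i=0}^{N-1}(1/f_i)>0$, and let $K=(k_{ij})\in SL(2,\mathbb R)$; write $\lambda_j(K)$, $\lambda_j(-K)$ for the eigenvalues with boundary conditions $[K|-I]$, $[-K|-I]$. (i) If $k_{11}-f_0k_{12}>0$, then each of the problems with $[K|-I]$ and $[-K|-I]$ has exactly $N$ eigenvalues; $\lambda_0(K)$ is a simple eigenvalue; if $\lambda_j(K)<\lambda_{j+1}(K)$ for some odd $j$ with $1\le j\le N-2$, then $\lambda_j(K)$ and $\lambda_{j+1}(K)$ are simple; if $\lambda_j(-K)<\lambda_{j+1}(-K)$ for some even $j$ with $0\le j\le N-2$, then $\lambda_j(-K)$ and $\lambda_{j+1}(-K)$ are simple; if $N$ is odd then $\lambda_{N-1}(-K)$ is simple, and if $N$ is even then $\lambda_{N-1}(K)$ is simple. (ii) If $k_{11}-f_0k_{12}<0$, the same conclusions as in (i) hold with $K$ replaced by $-K$ (and $-K$ by $K$).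
   Context: Let $N\ge2$ be an integer. An equation is given by real sequences $f=\{f_n\}_{n=0}^N$, $q=\{q_n\}_{n=1}^N$, $w=\{w_n\}_{n=1}^N$ with $f_n\neq0$, $w_n>0$; it is $-\nabla(f_n\Delta y_n)+q_ny_n=\lambda w_ny_n$, $1\le n\le N$, for $y=\{y_n\}_{n=0}^{N+1}$, $\Delta y_n=y_{n+1}-y_n$, $\nabla y_n=y_n-y_{n-1}$. The boundary condition $[A\,|\,B]$ is $A(y_0,f_0\Delta y_0)^T+B(y_N,f_N\Delta y_N)^T=0$. $SL(2,\mathbb R)$: real $2\times2$ matrices of determinant 1; $I$ the identity. Eigenvalues ($\lambda$ with a nontrivial solution) are real; the multiplicity is the dimension of the solution space (equal to the multiplicity as a zero of the characteristic polynomial); simple means multiplicity one; counted with multiplicity they are ordered $\lambda_0\le\lambda_1\le\cdots$. *)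

theory Defs
  imports "HOL-Analysis.Analysis" "HOL-Library.Multiset" "HOL-Library.Function_Algebras"
begin

text \<open>Sequences are functions on nat; y is indexed 0..N+1, f 0..N, q and w 1..N.\<close>

definition fwd :: "(nat \<Rightarrow> real) \<Rightarrow> nat \<Rightarrow> real" where
  "fwd y n = y (Suc n) - y n"

definition solves_eq :: "nat \<Rightarrow> (nat \<Rightarrow> real) \<Rightarrow> (nat \<Rightarrow> real) \<Rightarrow> (nat \<Rightarrow> real)
    \<Rightarrow> real \<Rightarrow> (nat \<Rightarrow> real) \<Rightarrow> bool" where
  "solves_eq N f q w lam y \<longleftrightarrow>
     (\<forall>n\<in>{1..N}. - (f n * fwd y n - f (n - 1) * fwd y (n - 1)) + q n * y n = lam * w n * y n)"

definition satisfies_bc :: "nat \<Rightarrow> (nat \<Rightarrow> real) \<Rightarrow> real^2^2 \<Rightarrow> real^2^2 \<Rightarrow> (nat \<Rightarrow> real) \<Rightarrow> bool" where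
  "satisfies_bc N f A B y \<longleftrightarrow>
     A *v vector [y 0, f 0 * fwd y 0] + B *v vector [y N, f N * fwd y N] = 0"

text \<open>Solution space for lam: solutions y = {y_n}_{n=0}^{N+1}, represented as functions
  vanishing beyond N+1.\<close>
definition sol_space :: "nat \<Rightarrow> (nat \<Rightarrow> real) \<Rightarrow> (nat \<Rightarrow> real) \<Rightarrow> (nat \<Rightarrow> real)
    \<Rightarrow> real^2^2 \<Rightarrow> real^2^2 \<Rightarrow> real \<Rightarrow> (nat \<Rightarrow> real) set" where
  "sol_space N f q w A B lam =
     {y. (\<forall>n > N + 1. y n = 0) \<and> solves_eq N f q w lam y \<and> satisfies_bc N f A B y}"

definition is_eigenvalue :: "nat \<Rightarrow> (nat \<Rightarrow> real) \<Rightarrow> (nat \<Rightarrow> real) \<Rightarrow> (nat \<Rightarrow> real)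
    \<Rightarrow> real^2^2 \<Rightarrow> real^2^2 \<Rightarrow> real \<Rightarrow> bool" where
  "is_eigenvalue N f q w A B lam \<longleftrightarrow> (\<exists>y \<in> sol_space N f q w A B lam. y \<noteq> (\<lambda>_. 0))"

definition eigenvalues :: "nat \<Rightarrow> (nat \<Rightarrow> real) \<Rightarrow> (nat \<Rightarrow> real) \<Rightarrow> (nat \<Rightarrow> real)
    \<Rightarrow> real^2^2 \<Rightarrow> real^2^2 \<Rightarrow> real set" where
  "eigenvalues N f q w A B = {lam. is_eigenvalue N f q w A B lam}"

definition multiplicity_ev :: "nat \<Rightarrow> (nat \<Rightarrow> real) \<Rightarrow> (nat \<Rightarrow> real) \<Rightarrow> (nat \<Rightarrow> real)
    \<Rightarrow> real^2^2 \<Rightarrow> real^2^2 \<Rightarrow> real \<Rightarrow> nat" where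
  "multiplicity_ev N f q w A B lam =
     vector_space.dim (\<lambda>(c::real) (y::nat \<Rightarrow> real) n. c * y n) (sol_space N f q w A B lam)"

definition eig_mset :: "nat \<Rightarrow> (nat \<Rightarrow> real) \<Rightarrow> (nat \<Rightarrow> real) \<Rightarrow> (nat \<Rightarrow> real)
    \<Rightarrow> real^2^2 \<Rightarrow> real^2^2 \<Rightarrow> real multiset" where
  "eig_mset N f q w A B =
     (\<Sum>lam \<in> eigenvalues N f q w A B. replicate_mset (multiplicity_ev N f q w A B lam) lam)"

definition eig :: "nat \<Rightarrow> (nat \<Rightarrow> real) \<Rightarrow> (nat \<Rightarrow> real) \<Rightarrow> (nat \<Rightarrow> real)
    \<Rightarrow> real^2^2 \<Rightarrow> real^2^2 \<Rightarrow> nat \<Rightarrow> real" where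
  "eig N f q w A B j = sorted_list_of_multiset (eig_mset N f q w A B) ! j"

definition has_n_eigenvalues :: "nat \<Rightarrow> (nat \<Rightarrow> real) \<Rightarrow> (nat \<Rightarrow> real) \<Rightarrow> (nat \<Rightarrow> real)
    \<Rightarrow> real^2^2 \<Rightarrow> real^2^2 \<Rightarrow> nat \<Rightarrow> bool" where
  "has_n_eigenvalues N f q w A B m \<longleftrightarrow>
     finite (eigenvalues N f q w A B) \<and> size (eig_mset N f q w A B) = m"

definition simple_ev :: "nat \<Rightarrow> (nat \<Rightarrow> real) \<Rightarrow> (nat \<Rightarrow> real) \<Rightarrow> (nat \<Rightarrow> real)
    \<Rightarrow> real^2^2 \<Rightarrow> real^2^2 \<Rightarrow> real \<Rightarrow> bool" where
  "simple_ev N f q w A B lam \<longleftrightarrow> is_eigenvalue N f q w A B lam \<and> multiplicity_ev N f q w A B lam = 1"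

definition conclusions :: "nat \<Rightarrow> (nat \<Rightarrow> real) \<Rightarrow> (nat \<Rightarrow> real) \<Rightarrow> (nat \<Rightarrow> real)
    \<Rightarrow> real^2^2 \<Rightarrow> bool" where
  "conclusions N f q w K \<longleftrightarrow>
     (let P = eig N f q w K (- mat 1); M = eig N f q w (- K) (- mat 1);
          sP = simple_ev N f q w K (- mat 1); sM = simple_ev N f q w (- K) (- mat 1) in
     has_n_eigenvalues N f q w K (- mat 1) N \<and>
     has_n_eigenvalues N f q w (- K) (- mat 1) N \<and>
     sP (P 0) \<and>
     (\<forall>j. odd j \<and> 1 \<le> j \<and> j \<le> N - 2 \<and> P j < P (j + 1) \<longrightarrow> sP (P j) \<and> sP (P (j + 1))) \<and>
     (\<forall>j. even j \<and> j \<le> N - 2 \<and> M j < M (j + 1) \<longrightarrow> sM (M j) \<and> sM (M (j + 1))) \<and>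
     (odd N \<longrightarrow> sM (M (N - 1))) \<and>
     (even N \<longrightarrow> sP (P (N - 1))))"

end

theory Submission
  imports Defs "HOL-Computational_Algebra.Fundamental_Theorem_Algebra"
begin

definition ev :: "'a::real_field \<Rightarrow> real poly \<Rightarrow> 'a" where
  "ev z p = poly (map_poly of_real p) z"

lemma map_poly_of_real_add: "map_poly of_real (p + q) = (map_poly of_real p + map_poly of_real q :: 'a::real_field poly)"
  by (rule poly_eqI) (simp add: coeff_map_poly)

lemma map_poly_of_real_mult: "map_poly of_real (p * q) = (map_poly of_real p * map_poly of_real q :: 'a::real_field poly)"
  by (rule poly_eqI) (simp add: coeff_map_poly coeff_mult of_real_sum)

lemma ev_add[simp]: "ev z (p + q) = ev z p + ev z q"
  by (simp add: ev_def map_poly_of_real_add)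
lemma ev_mult[simp]: "ev z (p * q) = ev z p * ev z q"
  by (simp add: ev_def map_poly_of_real_mult)
lemma ev_smult[simp]: "ev z (smult c p) = of_real c * ev z p"
  by (simp add: ev_def map_poly_smult)
lemma ev_pCons[simp]: "ev z (pCons a p) = of_real a + z * ev z p"
  by (simp add: ev_def map_poly_pCons)
lemma ev_0[simp]: "ev z 0 = 0"
  by (simp add: ev_def)
lemma ev_minus[simp]: "ev z (- p) = - ev z p"
proof -
  have "ev z (p + - p) = 0" by simp
  then show ?thesis by (simp only: ev_add) (metis add.commute eq_neg_iff_add_eq_0)
qed
lemma ev_diff[simp]: "ev z (p - q) = ev z p - ev z q"
  using ev_add[of z p "-q"] by simp
lemma ev_sum[simp]: "ev z (sum g A) = (\<Sum>x\<in>A. ev z (g x))"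
  by (induction A rule: infinite_finite_induct) auto
lemma ev_real[simp]: "ev (x::real) p = poly p x"
  by (simp add: ev_def)
lemma ev_of_real: "ev (of_real x :: 'a::real_field) p = of_real (poly p x)"
  by (induction p) (auto)

fun Ys :: "(nat\<Rightarrow>real)\<Rightarrow>(nat\<Rightarrow>real)\<Rightarrow>(nat\<Rightarrow>real)\<Rightarrow>'a::real_field\<Rightarrow>'a\<Rightarrow>'a\<Rightarrow>nat\<Rightarrow>'a\<times>'a" where
  "Ys f q w z a c 0 = (a, c)"
| "Ys f q w z a c (Suc n) = (let Y = Ys f q w z a c n; y' = fst Y + snd Y * of_real (1 / f n) in
      (y', snd Y + (of_real (q (Suc n)) - z * of_real (w (Suc n))) * y'))"

fun Pp :: "(nat\<Rightarrow>real)\<Rightarrow>(nat\<Rightarrow>real)\<Rightarrow>(nat\<Rightarrow>real)\<Rightarrow>real\<Rightarrow>real\<Rightarrow>nat\<Rightarrow>real poly\<times>real poly" where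
  "Pp f q w a c 0 = ([:a:], [:c:])"
| "Pp f q w a c (Suc n) = (let Y = Pp f q w a c n; y' = fst Y + smult (1 / f n) (snd Y) in
      (y', snd Y + [:q (Suc n), - w (Suc n):] * y'))"

lemma Ys_link:
  "Ys f q w z a c n =
    (a * ev z (fst (Pp f q w 1 0 n)) + c * ev z (fst (Pp f q w 0 1 n)),
     a * ev z (snd (Pp f q w 1 0 n)) + c * ev z (snd (Pp f q w 0 1 n)))"
  by (induction n) (auto simp: Let_def algebra_simps add_divide_distrib[symmetric])

lemma Ys_wronski:
  "fst (Ys f q w z 1 0 n) * snd (Ys f q w z 0 1 n) - fst (Ys f q w z 0 1 n) * snd (Ys f q w z 1 0 n) = 1"
  by (induction n) (auto simp: Let_def algebra_simps)

lemma green_step: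
  fixes y u y2 u2 sc qq ww z m :: "'a::field"
  assumes "yy = y + u * sc" "uu = u + (qq - z * ww) * yy" "yy2 = y2 + u2 * sc" "uu2 = u2 + (qq - m * ww) * yy2"
  shows "yy2 * uu - uu2 * yy = y2 * u - u2 * y + (m - z) * (ww * yy * yy2)"
  unfolding assms(2,4) by (simp add: assms(1,3) algebra_simps)

lemma Ys_green:
  "fst (Ys f q w m b d n) * snd (Ys f q w z a c n) - snd (Ys f q w m b d n) * fst (Ys f q w z a c n)
   - (b * c - d * a) = (m - z) * (\<Sum>k\<in>{1..n}. of_real (w k) * fst (Ys f q w z a c k) * fst (Ys f q w m b d k))"
proof (induction n)
  case 0 then show ?case by simp
next
  case (Suc n)
  define Y where "Y = Ys f q w z a c" 
  define Z where "Z = Ys f q w m b d"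
  have st: "fst (Z (Suc n)) * snd (Y (Suc n)) - snd (Z (Suc n)) * fst (Y (Suc n)) =
     fst (Z n) * snd (Y n) - snd (Z n) * fst (Y n) + (m - z) * (of_real (w (Suc n)) * fst (Y (Suc n)) * fst (Z (Suc n)))"
    by (rule green_step[where sc="of_real (1 / f n)" and qq="of_real (q (Suc n))"]) (simp_all add: Let_def Y_def Z_def)
  have "{1..Suc n} = insert (Suc n) {1..n}" by auto
  then have sm: "(\<Sum>k\<in>{1..Suc n}. of_real (w k) * fst (Y k) * fst (Z k)) =
     of_real (w (Suc n)) * fst (Y (Suc n)) * fst (Z (Suc n)) + (\<Sum>k\<in>{1..n}. of_real (w k) * fst (Y k) * fst (Z k))"
    by simp
  have IH: "fst (Z n) * snd (Y n) - snd (Z n) * fst (Y n) - (b * c - d * a) = (m - z) * (\<Sum>k\<in>{1..n}. of_real (w k) * fst (Y k) * fst (Z k))"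
    using Suc unfolding Y_def Z_def .
  show ?case unfolding Y_def[symmetric] Z_def[symmetric] st sm
    using IH by (simp add: algebra_simps)
qed



definition scl :: "real \<Rightarrow> (nat \<Rightarrow> real) \<Rightarrow> (nat \<Rightarrow> real)" where
  "scl = (\<lambda>(c::real) (y::nat \<Rightarrow> real) n. c * y n)"

interpretation VS: vector_space scl
  by unfold_locales (auto simp: scl_def fun_eq_iff algebra_simps)

lemma mult_ev_def: "multiplicity_ev N f q w A B lam = VS.dim (sol_space N f q w A B lam)"
  by (simp add: multiplicity_ev_def scl_def)

lemma bc_iff:
  "satisfies_bc N f K (- mat 1) y \<longleftrightarrow>
    (K$1$1 * y 0 + K$1$2 * (f 0 * fwd y 0) = y N \<and> K$2$1 * y 0 + K$2$2 * (f 0 * fwd y 0) = f N * fwd y N)"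
  by (simp add: satisfies_bc_def vec_eq_iff forall_2 matrix_vector_mult_def sum_2 mat_def vector_2 algebra_simps)

locale slp =
  fixes N :: nat and f q w :: "nat \<Rightarrow> real"
  assumes N2: "N \<ge> 2"
    and fnz: "\<And>n. n \<le> N \<Longrightarrow> f n \<noteq> 0"
    and wpos: "\<And>n. 1 \<le> n \<Longrightarrow> n \<le> N \<Longrightarrow> w n > 0"
begin

abbreviation "Yr (lam::real) a c n \<equiv> Ys f q w lam a c n"

definition sol :: "real \<Rightarrow> real \<Rightarrow> real \<Rightarrow> nat \<Rightarrow> real" where
  "sol lam a c n = (if n \<le> N then fst (Yr lam a c n) else if n = N + 1 then
      fst (Yr lam a c N) + snd (Yr lam a c N) / f N else 0)"

lemma sol_u: "n \<le> N \<Longrightarrow> f n * fwd (sol lam a c) n = snd (Yr lam a c n)"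
proof -
  assume n: "n \<le> N"
  show ?thesis
  proof (cases "n = N")
    case True then show ?thesis using fnz[of N] by (simp add: fwd_def sol_def field_simps)
  next
    case False
    then have "Suc n \<le> N" using n by simp
    then show ?thesis using fnz[of n] n by (simp add: fwd_def sol_def Let_def field_simps)
  qed
qed

lemma sol_0: "sol lam a c 0 = a" by (simp add: sol_def)
lemma sol_u0: "f 0 * fwd (sol lam a c) 0 = c" using sol_u[of 0] by simp
lemma sol_N: "sol lam a c N = fst (Yr lam a c N)" by (simp add: sol_def)
lemma sol_uN: "f N * fwd (sol lam a c) N = snd (Yr lam a c N)" using sol_u[of N] by simp

lemma sol_solves: "solves_eq N f q w lam (sol lam a c)"
  unfolding solves_eq_def
proof
  fix n assume n: "n \<in> {1..N}"
  then obtain m where m: "n = Suc m" by (cases n) auto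
  have "f n * fwd (sol lam a c) n - f (n - 1) * fwd (sol lam a c) (n - 1) = snd (Yr lam a c n) - snd (Yr lam a c m)"
    using sol_u[of n] sol_u[of m] n m by auto
  also have "\<dots> = (q n - lam * w n) * sol lam a c n"
    using n m by (simp add: Let_def sol_def)
  finally show "- (f n * fwd (sol lam a c) n - f (n - 1) * fwd (sol lam a c) (n - 1)) + q n * sol lam a c n =
      lam * w n * sol lam a c n" by (simp add: algebra_simps)
qed

lemma sol_zero: "n > N + 1 \<Longrightarrow> sol lam a c n = 0" by (simp add: sol_def)

lemma solves_is_sol:
  assumes z: "\<forall>n > N + 1. y n = 0" and s: "solves_eq N f q w lam y"
  shows "y = sol lam (y 0) (f 0 * fwd y 0)"
proof -
  let ?a = "y 0" and ?c = "f 0 * fwd y 0"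
  have Y: "n \<le> N \<Longrightarrow> Yr lam ?a ?c n = (y n, f n * fwd y n)" for n
  proof (induction n)
    case 0 then show ?case by simp
  next
    case (Suc n)
    then have IH: "Yr lam ?a ?c n = (y n, f n * fwd y n)" by simp
    have e: "- (f (Suc n) * fwd y (Suc n) - f n * fwd y n) + q (Suc n) * y (Suc n) = lam * w (Suc n) * y (Suc n)"
      using s Suc.prems unfolding solves_eq_def by force
    have fn: "f n \<noteq> 0" using fnz Suc.prems by simp
    have "fst (Yr lam ?a ?c (Suc n)) = y (Suc n)"
      using IH fn by (simp add: Let_def fwd_def)
    moreover have "snd (Yr lam ?a ?c (Suc n)) = f (Suc n) * fwd y (Suc n)"
    proof -
      have "snd (Yr lam ?a ?c (Suc n)) = snd (Yr lam ?a ?c n) + (q (Suc n) - lam * w (Suc n)) * fst (Yr lam ?a ?c (Suc n))"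
        by (simp add: Let_def)
      also have "\<dots> = f n * fwd y n + (q (Suc n) - lam * w (Suc n)) * y (Suc n)"
        using IH \<open>fst (Yr lam ?a ?c (Suc n)) = y (Suc n)\<close> by simp
      finally show ?thesis using e unfolding left_diff_distrib by linarith
    qed
    ultimately show ?case by (simp add: prod_eq_iff)
  qed
  show ?thesis
  proof
    fix n
    consider "n \<le> N" | "n = N + 1" | "n > N + 1" by linarith
    then show "y n = sol lam ?a ?c n"
    proof cases
      case 1 then show ?thesis using Y[of n] by (simp add: sol_def)
    next
      case 2 then show ?thesis using Y[of N] fnz[of N] by (simp add: sol_def fwd_def)
    next
      case 3 then show ?thesis using z by (simp add: sol_def)
    qed
  qed
qed

definition TY where "TY = fst (Pp f q w 1 0 N)"
definition TU where "TU = snd (Pp f q w 1 0 N)"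
definition FY where "FY = fst (Pp f q w 0 1 N)"
definition FU where "FU = snd (Pp f q w 0 1 N)"

lemma YrN: "Yr lam a c N = (a * poly TY lam + c * poly FY lam, a * poly TU lam + c * poly FU lam)"
  using Ys_link[of f q w lam a c N] by (simp add: TY_def TU_def FY_def FU_def)

lemma wronski: "poly TY lam * poly FU lam - poly FY lam * poly TU lam = 1"
  using Ys_wronski[of f q w lam N] YrN[of lam 1 0] YrN[of lam 0 1] by simp

lemma sol_space_eq:
  "sol_space N f q w K (- mat 1) lam = (\<lambda>(a,c). sol lam a c) `
     {(a,c). (poly TY lam - K$1$1) * a + (poly FY lam - K$1$2) * c = 0 \<and>
             (poly TU lam - K$2$1) * a + (poly FU lam - K$2$2) * c = 0}"
proof (intro set_eqI iffI)
  fix y assume "y \<in> sol_space N f q w K (- mat 1) lam"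
  then have z: "\<forall>n > N + 1. y n = 0" and s: "solves_eq N f q w lam y" and b: "satisfies_bc N f K (- mat 1) y"
    by (auto simp: sol_space_def)
  have ys: "y = sol lam (y 0) (f 0 * fwd y 0)" by (rule solves_is_sol[OF z s])
  show "y \<in> (\<lambda>(a,c). sol lam a c) ` {(a,c). (poly TY lam - K$1$1) * a + (poly FY lam - K$1$2) * c = 0 \<and>
             (poly TU lam - K$2$1) * a + (poly FU lam - K$2$2) * c = 0}"
  proof (rule image_eqI[where x="(y 0, f 0 * fwd y 0)"])
    show "y = (\<lambda>(a,c). sol lam a c) (y 0, f 0 * fwd y 0)" using ys by simp
    have yN: "y N = fst (Yr lam (y 0) (f 0 * fwd y 0) N)" "f N * fwd y N = snd (Yr lam (y 0) (f 0 * fwd y 0) N)"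
      using ys sol_N sol_uN by metis+
    have b1: "K$1$1 * y 0 + K$1$2 * (f 0 * fwd y 0) = y N" and b2: "K$2$1 * y 0 + K$2$2 * (f 0 * fwd y 0) = f N * fwd y N"
      using b unfolding bc_iff by auto
    show "(y 0, f 0 * fwd y 0) \<in> {(a,c). (poly TY lam - K$1$1) * a + (poly FY lam - K$1$2) * c = 0 \<and>
             (poly TU lam - K$2$1) * a + (poly FU lam - K$2$2) * c = 0}"
    proof -
      have c1: "K$1$1 * y 0 + K$1$2 * (f 0 * fwd y 0) = y 0 * poly TY lam + (f 0 * fwd y 0) * poly FY lam"
        using b1 yN(1) YrN by simp
      have c2: "K$2$1 * y 0 + K$2$2 * (f 0 * fwd y 0) = y 0 * poly TU lam + (f 0 * fwd y 0) * poly FU lam"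
        using b2 yN(2) YrN by simp
      show ?thesis using c1 c2 unfolding mem_Collect_eq case_prod_conv left_diff_distrib
        by (simp only: mult.commute) linarith
    qed
  qed
next
  fix y assume "y \<in> (\<lambda>(a,c). sol lam a c) ` {(a,c). (poly TY lam - K$1$1) * a + (poly FY lam - K$1$2) * c = 0 \<and>
             (poly TU lam - K$2$1) * a + (poly FU lam - K$2$2) * c = 0}"
  then obtain a c where y: "y = sol lam a c" and
    e: "(poly TY lam - K$1$1) * a + (poly FY lam - K$1$2) * c = 0"
       "(poly TU lam - K$2$1) * a + (poly FU lam - K$2$2) * c = 0" by auto
  have "satisfies_bc N f K (- mat 1) y"
    unfolding bc_iff y sol_0 sol_u0 sol_N sol_uN YrN using e by (simp add: algebra_simps)
  then show "y \<in> sol_space N f q w K (- mat 1) lam"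
    using sol_solves sol_zero y by (auto simp: sol_space_def)
qed

end


context slp begin

lemma sol_lin: "sol lam a c = scl a (sol lam 1 0) + scl c (sol lam 0 1)"
proof
  fix n
  have l: "Yr lam a c n = (a * fst (Yr lam 1 0 n) + c * fst (Yr lam 0 1 n), a * snd (Yr lam 1 0 n) + c * snd (Yr lam 0 1 n))"
    using Ys_link[of f q w lam a c n] Ys_link[of f q w lam 1 0 n] Ys_link[of f q w lam 0 1 n] by simp
  have l2: "Yr lam a c N = (a * fst (Yr lam 1 0 N) + c * fst (Yr lam 0 1 N), a * snd (Yr lam 1 0 N) + c * snd (Yr lam 0 1 N))"
    using Ys_link[of f q w lam a c N] Ys_link[of f q w lam 1 0 N] Ys_link[of f q w lam 0 1 N] by simp
  show "sol lam a c n = (scl a (sol lam 1 0) + scl c (sol lam 0 1)) n"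
    unfolding sol_def scl_def plus_fun_def using l l2 by (simp add: algebra_simps add_divide_distrib)
qed

lemma sol_inj: "sol lam a c = 0 \<Longrightarrow> a = 0 \<and> c = 0"
  using sol_0[of lam a c] sol_u0[of lam a c] by (auto simp: fwd_def)

lemma sol_scale: "sol lam (t * a) (t * c) = scl t (sol lam a c)"
  unfolding sol_lin[of lam "t*a" "t*c"] sol_lin[of lam a c] by (auto simp: scl_def fun_eq_iff algebra_simps)

lemma sol_00: "sol lam 0 0 = 0"
  unfolding sol_lin[of lam 0 0] by (auto simp: scl_def fun_eq_iff)

lemma s1_ne: "sol lam 1 0 \<noteq> 0" using sol_inj[of lam 1 0] by auto
lemma s2_ne: "sol lam 0 1 \<noteq> 0" using sol_inj[of lam 0 1] by auto

lemma ker_cases: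
  fixes d11 d12 d21 d22 :: real
  defines "Kn \<equiv> {(a,c). d11 * a + d12 * c = 0 \<and> d21 * a + d22 * c = 0}"
  shows "d11 = 0 \<and> d12 = 0 \<and> d21 = 0 \<and> d22 = 0 \<Longrightarrow> Kn = UNIV"
    and "\<not>(d11 = 0 \<and> d12 = 0 \<and> d21 = 0 \<and> d22 = 0) \<Longrightarrow> d11 * d22 - d12 * d21 = 0 \<Longrightarrow>
         \<exists>v1 v2. (v1, v2) \<noteq> (0,0) \<and> Kn = {(t * v1, t * v2) | t. True}"
    and "d11 * d22 - d12 * d21 \<noteq> 0 \<Longrightarrow> Kn = {(0,0)}"
proof -
  show "d11 = 0 \<and> d12 = 0 \<and> d21 = 0 \<and> d22 = 0 \<Longrightarrow> Kn = UNIV" by (auto simp: Kn_def)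
next
  assume nz: "\<not>(d11 = 0 \<and> d12 = 0 \<and> d21 = 0 \<and> d22 = 0)" and det: "d11 * d22 - d12 * d21 = 0"
  show "\<exists>v1 v2. (v1, v2) \<noteq> (0,0) \<and> Kn = {(t * v1, t * v2) | t. True}"
  proof (cases "d11 = 0 \<and> d12 = 0")
    case False
    show ?thesis
    proof (intro exI conjI)
      show "(d12, - d11) \<noteq> (0,0)" using False by auto
      show "Kn = {(t * d12, t * - d11) | t. True}"
      proof (intro set_eqI iffI)
        fix x assume "x \<in> Kn"
        then obtain a c where x: "x = (a,c)" and e1: "d11 * a + d12 * c = 0" and e2: "d21 * a + d22 * c = 0"
          by (auto simp: Kn_def)
        show "x \<in> {(t * d12, t * - d11) | t. True}"
        proof (cases "d12 = 0")
          case True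
          then have "d11 \<noteq> 0" using False by auto
          then have "a = 0" using e1 True by simp
          then show ?thesis using x True \<open>d11 \<noteq> 0\<close> by (auto intro!: exI[of _ "- c / d11"])
        next
          case F: False
          have "c = (a / d12) * - d11" using e1 F by (simp add: field_simps)
          then show ?thesis using x F by (auto intro!: exI[of _ "a / d12"])
        qed
      next
        fix x assume "x \<in> {(t * d12, t * - d11) | t. True}"
        then obtain t where x: "x = (t * d12, t * - d11)" by auto
        have "d21 * (t * d12) + d22 * (t * - d11) = - t * (d11 * d22 - d12 * d21)" by (simp add: algebra_simps)
        then show "x \<in> Kn" using det x by (simp add: Kn_def algebra_simps)
      qed
    qed
  next
    case True
    then have F: "\<not> (d21 = 0 \<and> d22 = 0)" using nz by auto
    show ?thesis
    proof (intro exI conjI)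
      show "(d22, - d21) \<noteq> (0,0)" using F by auto
      show "Kn = {(t * d22, t * - d21) | t. True}"
      proof (intro set_eqI iffI)
        fix x assume "x \<in> Kn"
        then obtain a c where x: "x = (a,c)" and e2: "d21 * a + d22 * c = 0"
          by (auto simp: Kn_def)
        show "x \<in> {(t * d22, t * - d21) | t. True}"
        proof (cases "d22 = 0")
          case T: True
          then have "d21 \<noteq> 0" using F by auto
          then have "a = 0" using e2 T by simp
          then show ?thesis using x T \<open>d21 \<noteq> 0\<close> by (auto intro!: exI[of _ "- c / d21"])
        next
          case F2: False
          have "c = (a / d22) * - d21" using e2 F2 by (simp add: field_simps)
          then show ?thesis using x F2 by (auto intro!: exI[of _ "a / d22"])
        qed
      next
        fix x assume "x \<in> {(t * d22, t * - d21) | t. True}"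
        then show "x \<in> Kn" using True by (auto simp: Kn_def algebra_simps)
      qed
    qed
  qed
next
  assume det: "d11 * d22 - d12 * d21 \<noteq> 0"
  show "Kn = {(0,0)}"
  proof (intro set_eqI iffI)
    fix x assume "x \<in> Kn"
    then obtain a c where x: "x = (a,c)" and e1: "d11 * a + d12 * c = 0" and e2: "d21 * a + d22 * c = 0"
      by (auto simp: Kn_def)
    have "(d11 * d22 - d12 * d21) * a = d22 * (d11 * a + d12 * c) - d12 * (d21 * a + d22 * c)" by (simp add: algebra_simps)
    then have a: "a = 0" using e1 e2 det by simp
    have "(d11 * d22 - d12 * d21) * c = d11 * (d21 * a + d22 * c) - d21 * (d11 * a + d12 * c)" by (simp add: algebra_simps)
    then have "c = 0" using e1 e2 det by simp
    then show "x \<in> {(0,0)}" using a x by simp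
  qed (auto simp: Kn_def)
qed

lemma dim_sol_image:
  fixes d11 d12 d21 d22 :: real
  defines "Kn \<equiv> {(a,c). d11 * a + d12 * c = 0 \<and> d21 * a + d22 * c = 0}"
  shows "VS.dim ((\<lambda>(a,c). sol lam a c) ` Kn) =
    (if d11 = 0 \<and> d12 = 0 \<and> d21 = 0 \<and> d22 = 0 then 2 else if d11 * d22 - d12 * d21 = 0 then 1 else 0)"
proof -
  let ?V = "(\<lambda>(a,c). sol lam a c) ` Kn"
  consider (z) "d11 = 0 \<and> d12 = 0 \<and> d21 = 0 \<and> d22 = 0"
    | (o) "\<not>(d11 = 0 \<and> d12 = 0 \<and> d21 = 0 \<and> d22 = 0)" "d11 * d22 - d12 * d21 = 0"
    | (n) "d11 * d22 - d12 * d21 \<noteq> 0" by auto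
  then show ?thesis
  proof cases
    case z
    have KU: "Kn = UNIV" unfolding Kn_def by (rule ker_cases(1)[OF z])
    have "VS.dim ?V = 2"
    proof (rule VS.dim_unique[where B="{sol lam 1 0, sol lam 0 1}"])
      show "{sol lam 1 0, sol lam 0 1} \<subseteq> ?V" unfolding KU by auto
      show "?V \<subseteq> VS.span {sol lam 1 0, sol lam 0 1}"
      proof
        fix y assume "y \<in> ?V"
        then obtain a c where y: "y = sol lam a c" by auto
        show "y \<in> VS.span {sol lam 1 0, sol lam 0 1}" unfolding y sol_lin[of lam a c]
          by (intro VS.span_add VS.span_scale VS.span_base) auto
      qed
      have ns: "sol lam 1 0 \<notin> VS.span {sol lam 0 1}"
      proof
        assume "sol lam 1 0 \<in> VS.span {sol lam 0 1}"
        then obtain k where "sol lam 1 0 = scl k (sol lam 0 1)" unfolding VS.span_singleton by auto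
        then have "sol lam 1 0 0 = k * sol lam 0 1 0" by (simp add: scl_def)
        then show False by (simp add: sol_0)
      qed
      have "VS.independent {sol lam 0 1}"
        by (rule VS.independent_insertI) (use s2_ne VS.independent_empty in auto)
      then show "VS.independent {sol lam 1 0, sol lam 0 1}"
        by (rule VS.independent_insertI[OF ns])
      have "sol lam 1 0 \<noteq> sol lam 0 1" using sol_0[of lam 1 0] sol_0[of lam 0 1] by force
      then show "card {sol lam 1 0, sol lam 0 1} = 2" by simp
    qed
    then show ?thesis using z by simp
  next
    case o
    have "\<exists>v1 v2. (v1, v2) \<noteq> (0,0) \<and> Kn = {(t * v1, t * v2) | t. True}"
      unfolding Kn_def by (rule ker_cases(2)[OF o])
    then obtain v1 v2 where v: "(v1, v2) \<noteq> (0,0)" and Kv: "Kn = {(t * v1, t * v2) | t. True}"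
      by blast
    have V: "?V = range (\<lambda>t. scl t (sol lam v1 v2))"
      unfolding Kv by (auto simp: sol_scale[symmetric])
    have ne: "sol lam v1 v2 \<noteq> 0" using sol_inj v by auto
    have "VS.dim ?V = 1"
    proof (rule VS.dim_unique[where B="{sol lam v1 v2}"])
      show "{sol lam v1 v2} \<subseteq> ?V" unfolding V
        by (auto intro!: range_eqI[where x=1] simp: scl_def)
      show "?V \<subseteq> VS.span {sol lam v1 v2}" unfolding V VS.span_singleton by auto
      show "VS.independent {sol lam v1 v2}"
        by (rule VS.independent_insertI) (use ne VS.independent_empty in auto)
    qed auto
    then show ?thesis using o by simp
  next
    case n
    have "Kn = {(0,0)}" unfolding Kn_def by (rule ker_cases(3)[OF n])
    then have V: "?V = {0}" by (simp add: sol_00)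
    have "VS.dim ?V = 0"
      by (rule VS.dim_unique[where B="{}"]) (auto simp: V VS.independent_empty)
    moreover have "\<not> (d11 = 0 \<and> d12 = 0 \<and> d21 = 0 \<and> d22 = 0)" using n by auto
    ultimately show ?thesis using n by simp
  qed
qed

definition gp :: "real^2^2 \<Rightarrow> real poly" where
  "gp K = smult (K$2$2) TY - smult (K$1$2) TU - smult (K$2$1) FY + smult (K$1$1) FU"

definition Pk :: "real^2^2 \<Rightarrow> real poly" where
  "Pk K = [:2:] - gp K"

lemma det_Pk:
  assumes "det K = 1"
  shows "(poly TY lam - K$1$1) * (poly FU lam - K$2$2) - (poly FY lam - K$1$2) * (poly TU lam - K$2$1) = poly (Pk K) lam"
proof -
  have d: "K$1$1 * K$2$2 - K$1$2 * K$2$1 = 1" using assms by (simp add: det_2)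
  have wr: "poly TY lam * poly FU lam - poly FY lam * poly TU lam = 1" by (rule wronski)
  show ?thesis unfolding Pk_def gp_def using d wr by (simp add: algebra_simps)
qed

lemma mult_eq:
  assumes "det K = 1"
  shows "multiplicity_ev N f q w K (- mat 1) lam =
    (if poly TY lam = K$1$1 \<and> poly FY lam = K$1$2 \<and> poly TU lam = K$2$1 \<and> poly FU lam = K$2$2 then 2
     else if poly (Pk K) lam = 0 then 1 else 0)"
  unfolding mult_ev_def sol_space_eq dim_sol_image det_Pk[OF assms] by auto

lemma is_ev_iff:
  assumes "det K = 1"
  shows "is_eigenvalue N f q w K (- mat 1) lam \<longleftrightarrow> poly (Pk K) lam = 0"
proof -
  have "is_eigenvalue N f q w K (- mat 1) lam \<longleftrightarrow> multiplicity_ev N f q w K (- mat 1) lam \<noteq> 0"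
  proof
    assume "is_eigenvalue N f q w K (- mat 1) lam"
    then obtain y where y: "y \<in> sol_space N f q w K (- mat 1) lam" "y \<noteq> (\<lambda>_. 0)"
      unfolding is_eigenvalue_def by auto
    show "multiplicity_ev N f q w K (- mat 1) lam \<noteq> 0"
    proof
      assume "multiplicity_ev N f q w K (- mat 1) lam = 0"
      then have "poly (Pk K) lam \<noteq> 0" by (simp add: mult_eq[OF assms] split: if_splits)
      then have "sol_space N f q w K (- mat 1) lam = {0}"
        unfolding sol_space_eq det_Pk[OF assms, symmetric] using ker_cases(3) by (simp add: sol_00)
      then show False using y by (auto simp: zero_fun_def)
    qed
  next
    assume m: "multiplicity_ev N f q w K (- mat 1) lam \<noteq> 0"
    show "is_eigenvalue N f q w K (- mat 1) lam"
    proof (rule ccontr)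
      assume "\<not> ?thesis"
      then have "sol_space N f q w K (- mat 1) lam \<subseteq> {0}"
        unfolding is_eigenvalue_def by (auto simp: zero_fun_def)
      moreover have "0 \<in> sol_space N f q w K (- mat 1) lam"
        unfolding sol_space_eq by (auto intro!: image_eqI[where x="(0,0)"] simp: sol_00)
      ultimately have "sol_space N f q w K (- mat 1) lam = {0}" by auto
      then have "multiplicity_ev N f q w K (- mat 1) lam = 0"
        unfolding mult_ev_def by (intro VS.dim_unique[where B="{}"]) (auto simp: VS.independent_empty)
      then show False using m by simp
    qed
  qed
  then show ?thesis using det_Pk[OF assms, of lam, symmetric] by (auto simp add: mult_eq[OF assms])
qed

end


lemma master:
  fixes A B C D T1 F1 T2 F2 G11 G12 G21 G22 e :: real
  assumes h1: "A * T2 - C * T1 = e * G11" and h2: "A * F2 - C * F1 - 1 = e * G12"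
    and h3: "B * T2 - D * T1 + 1 = e * G21" and h4: "B * F2 - D * F1 = e * G22" and hr: "A * D - B * C = 1"
  shows "T1 = A + e * (B * G11 - A * G21)" "F1 = B + e * (B * G12 - A * G22)"
        "T2 = C + e * (D * G11 - C * G21)" "F2 = D + e * (D * G12 - C * G22)"
proof -
  have hr': "\<And>x. (A * D - B * C) * x = x" using hr by simp
  have "B * (A * T2 - C * T1) - A * (B * T2 - D * T1 + 1) = (A * D - B * C) * T1 - A" by (simp add: algebra_simps)
  then have "T1 - A = B * (e * G11) - A * (e * G21)" unfolding h1 h3 hr' by simp
  then show "T1 = A + e * (B * G11 - A * G21)" by (simp add: algebra_simps)
  have "B * (A * F2 - C * F1 - 1) - A * (B * F2 - D * F1) = (A * D - B * C) * F1 - B" by (simp add: algebra_simps)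
  then have "F1 - B = B * (e * G12) - A * (e * G22)" unfolding h2 h4 hr' by simp
  then show "F1 = B + e * (B * G12 - A * G22)" by (simp add: algebra_simps)
  have "D * (A * T2 - C * T1) - C * (B * T2 - D * T1 + 1) = (A * D - B * C) * T2 - C" by (simp add: algebra_simps)
  then have "T2 - C = D * (e * G11) - C * (e * G21)" unfolding h1 h3 hr' by simp
  then show "T2 = C + e * (D * G11 - C * G21)" by (simp add: algebra_simps)
  have "D * (A * F2 - C * F1 - 1) - C * (B * F2 - D * F1) = (A * D - B * C) * F2 - D" by (simp add: algebra_simps)
  then have "F2 - D = D * (e * G12) - C * (e * G22)" unfolding h2 h4 hr' by simp
  then show "F2 = D + e * (D * G12 - C * G22)" by (simp add: algebra_simps)
qed

lemma det_expand:
  fixes d11 d12 d21 d22 E11 E12 E21 E22 e :: real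
  shows "(d11 + e * E11) * (d22 + e * E22) - (d12 + e * E12) * (d21 + e * E21) =
    (d11 * d22 - d12 * d21) + e * (d11 * E22 + d22 * E11 - d12 * E21 - d21 * E12) + e^2 * (E11 * E22 - E12 * E21)"
  by (simp add: algebra_simps power2_eq_square)

lemma mix_nz:
  fixes A B C D k11 k12 k21 k22 G11 G12 G22 :: real
  assumes hr: "A * D - B * C = 1" and hk: "k11 * k22 - k12 * k21 = 1"
    and hg: "(A - k11) * (D - k22) - (B - k12) * (C - k21) = 0"
    and hne: "\<not> (A = k11 \<and> B = k12 \<and> C = k21 \<and> D = k22)"
    and pd: "\<And>x1 x2. (x1, x2) \<noteq> (0,0) \<Longrightarrow> x1^2 * G11 + 2 * x1 * x2 * G12 + x2^2 * G22 > 0"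
  shows "(A - k11) * (D * G12 - C * G22) + (D - k22) * (B * G11 - A * G12)
        - (B - k12) * (D * G11 - C * G12) - (C - k21) * (B * G12 - A * G22) \<noteq> 0"
proof -
  define a where "a = k22 * A - k12 * C - 1"
  define b where "b = k22 * B - k12 * D"
  define c where "c = k11 * C - k21 * A"
  define d where "d = k11 * D - k21 * B - 1"
  have ad: "a + d = 0"
  proof -
    have "(A - k11) * (D - k22) - (B - k12) * (C - k21) = (A * D - B * C) + (k11 * k22 - k12 * k21) - (a + d + 2)"
      unfolding a_def d_def by (simp add: algebra_simps)
    then show ?thesis using hr hk hg by simp
  qed
  have dn: "a * d - b * c = 0"
  proof -
    have "a * d - b * c = (A * D - B * C) * (k11 * k22 - k12 * k21) - (a + d + 2) + 1"
      unfolding a_def b_def c_def d_def by (simp add: algebra_simps)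
    then show ?thesis using hr hk ad by simp
  qed
  have "d = - a" using ad by simp
  then have "a * d = - (a * a)" by simp
  then have abc: "a^2 + b * c = 0" using dn unfolding power2_eq_square by linarith
  have mix: "(A - k11) * (D * G12 - C * G22) + (D - k22) * (B * G11 - A * G12)
        - (B - k12) * (D * G11 - C * G12) - (C - k21) * (B * G12 - A * G22) = - b * G11 + (a - d) * G12 + c * G22"
    unfolding a_def b_def c_def d_def by (simp add: algebra_simps)
  have nz: "\<not> (a = 0 \<and> b = 0 \<and> c = 0)"
  proof
    assume z: "a = 0 \<and> b = 0 \<and> c = 0"
    then have d0: "d = 0" using ad by simp
    have hk': "\<And>x. (k11 * k22 - k12 * k21) * x = x" using hk by simp
    have "k11 * (a + 1) + k12 * c = (k11 * k22 - k12 * k21) * A" unfolding a_def c_def by (simp add: algebra_simps)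
    then have "A = k11 * (a + 1) + k12 * c" unfolding hk' by simp
    moreover have "k11 * b + k12 * (d + 1) = (k11 * k22 - k12 * k21) * B" unfolding b_def d_def by (simp add: algebra_simps)
    then have "B = k11 * b + k12 * (d + 1)" unfolding hk' by simp
    moreover have "k21 * (a + 1) + k22 * c = (k11 * k22 - k12 * k21) * C" unfolding a_def c_def by (simp add: algebra_simps)
    then have "C = k21 * (a + 1) + k22 * c" unfolding hk' by simp
    moreover have "k21 * b + k22 * (d + 1) = (k11 * k22 - k12 * k21) * D" unfolding b_def d_def by (simp add: algebra_simps)
    then have "D = k21 * b + k22 * (d + 1)" unfolding hk' by simp
    ultimately show False using hne z d0 by simp
  qed
  show ?thesis unfolding mix
  proof (cases "b = 0")
    case True
    then have "a = 0" using abc by simp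
    then have "c \<noteq> 0" using nz True by simp
    have "G22 > 0" using pd[of 0 1] by simp
    then show "- b * G11 + (a - d) * G12 + c * G22 \<noteq> 0" using True \<open>a = 0\<close> ad \<open>c \<noteq> 0\<close> by simp
  next
    case False
    have p: "b^2 * G11 + 2 * b * (- a) * G12 + (- a)^2 * G22 > 0" using pd[of b "- a"] False by simp
    have "- b * (- b * G11 + (a - d) * G12 + c * G22) = b^2 * G11 + 2 * b * (- a) * G12 + (- a)^2 * G22"
    proof -
      have "d = - a" using ad by simp
      moreover have "b * c = - (a * a)" using abc by (simp add: power2_eq_square)
      ultimately show ?thesis by (simp add: algebra_simps power2_eq_square)
    qed
    then show "- b * G11 + (a - d) * G12 + c * G22 \<noteq> 0" using p by auto
  qed
qed

lemma det_pos:
  fixes G11 G12 G22 :: real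
  assumes pd: "\<And>x1 x2. (x1, x2) \<noteq> (0,0) \<Longrightarrow> x1^2 * G11 + 2 * x1 * x2 * G12 + x2^2 * G22 > 0"
  shows "G11 * G22 - G12 * G12 > 0"
proof -
  have g: "G11 > 0" using pd[of 1 0] by simp
  have "G12^2 * G11 + 2 * G12 * (- G11) * G12 + (- G11)^2 * G22 > 0" using pd[of G12 "- G11"] g by simp
  moreover have "G12^2 * G11 + 2 * G12 * (- G11) * G12 + (- G11)^2 * G22 = G11 * (G11 * G22 - G12 * G12)"
    by (simp add: algebra_simps power2_eq_square)
  ultimately show ?thesis using g by (simp add: zero_less_mult_iff)
qed



context slp begin

definition thp where "thp k = fst (Pp f q w 1 0 k)"
definition php where "php k = fst (Pp f q w 0 1 k)"

lemma fst_Yr: "fst (Yr lam a c k) = a * poly (thp k) lam + c * poly (php k) lam"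
  using Ys_link[of f q w lam a c k] by (simp add: thp_def php_def)

definition "G11p r = (\<Sum>k\<in>{1..N}. smult (w k * poly (thp k) r) (thp k))"
definition "G12p r = (\<Sum>k\<in>{1..N}. smult (w k * poly (thp k) r) (php k))"
definition "G21p r = (\<Sum>k\<in>{1..N}. smult (w k * poly (php k) r) (thp k))"
definition "G22p r = (\<Sum>k\<in>{1..N}. smult (w k * poly (php k) r) (php k))"

lemma green_real:
  fixes r lam :: real
  shows "poly TY r * poly TU lam - poly TU r * poly TY lam = (r - lam) * poly (G11p r) lam"
    and "poly TY r * poly FU lam - poly TU r * poly FY lam - 1 = (r - lam) * poly (G12p r) lam"
    and "poly FY r * poly TU lam - poly FU r * poly TY lam + 1 = (r - lam) * poly (G21p r) lam"
    and "poly FY r * poly FU lam - poly FU r * poly FY lam = (r - lam) * poly (G22p r) lam"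
proof -
  have S: "(\<Sum>k\<in>{1..N}. w k * fst (Yr lam a c k) * fst (Yr r b d k)) =
     (\<Sum>k\<in>{1..N}. w k * (b * poly (thp k) r + d * poly (php k) r) * (a * poly (thp k) lam + c * poly (php k) lam))" for a c b d
    by (rule sum.cong) (auto simp: fst_Yr)
  note g = Ys_green[of f q w r _ _ N lam, unfolded of_real_eq_id id_def]
  show "poly TY r * poly TU lam - poly TU r * poly TY lam = (r - lam) * poly (G11p r) lam"
    using g[of 1 0 1 0] unfolding S YrN by (simp add: G11p_def poly_sum mult_ac)
  show "poly TY r * poly FU lam - poly TU r * poly FY lam - 1 = (r - lam) * poly (G12p r) lam"
    using g[of 1 0 0 1] unfolding S YrN by (simp add: G12p_def poly_sum mult_ac)
  show "poly FY r * poly TU lam - poly FU r * poly TY lam + 1 = (r - lam) * poly (G21p r) lam"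
    using g[of 0 1 1 0] unfolding S YrN by (simp add: G21p_def poly_sum mult_ac)
  show "poly FY r * poly FU lam - poly FU r * poly FY lam = (r - lam) * poly (G22p r) lam"
    using g[of 0 1 0 1] unfolding S YrN by (simp add: G22p_def poly_sum mult_ac)
qed


definition "E11p r = smult (poly FY r) (G11p r) - smult (poly TY r) (G21p r)"
definition "E12p r = smult (poly FY r) (G12p r) - smult (poly TY r) (G22p r)"
definition "E21p r = smult (poly FU r) (G11p r) - smult (poly TU r) (G21p r)"
definition "E22p r = smult (poly FU r) (G12p r) - smult (poly TU r) (G22p r)"
definition "Mp K r = smult (poly TY r - K$1$1) (E22p r) + smult (poly FU r - K$2$2) (E11p r)
   - smult (poly FY r - K$1$2) (E21p r) - smult (poly TU r - K$2$1) (E12p r)"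
definition "Hp r = E11p r * E22p r - E12p r * E21p r"

lemma Pk_expand:
  assumes dK: "det K = 1"
  shows "Pk K = [:poly (Pk K) r:] + [:r, -1:] * Mp K r + [:r, -1:]^2 * Hp r"
proof (rule poly_eq_poly_eq_iff[THEN iffD1], rule ext)
  fix lam :: real
  let ?A = "poly TY r" and ?B = "poly FY r" and ?C = "poly TU r" and ?D = "poly FU r"
  let ?e = "r - lam"
  note gr = green_real[of r lam]
  have hr: "?A * ?D - ?B * ?C = 1" by (rule wronski)
  note m = master[OF gr(1) gr(2) gr(3) gr(4) hr]
  have "poly (Pk K) lam = (poly TY lam - K$1$1) * (poly FU lam - K$2$2) - (poly FY lam - K$1$2) * (poly TU lam - K$2$1)"
    by (rule det_Pk[OF dK, symmetric])
  also have "\<dots> = ((?A - K$1$1) + ?e * poly (E11p r) lam) * ((?D - K$2$2) + ?e * poly (E22p r) lam)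
      - ((?B - K$1$2) + ?e * poly (E12p r) lam) * ((?C - K$2$1) + ?e * poly (E21p r) lam)"
    unfolding E11p_def E12p_def E21p_def E22p_def by (subst m(1), subst m(2), subst m(3), subst m(4)) (simp add: algebra_simps)
  also have "\<dots> = ((?A - K$1$1) * (?D - K$2$2) - (?B - K$1$2) * (?C - K$2$1)) + ?e * poly (Mp K r) lam + ?e^2 * poly (Hp r) lam"
    unfolding det_expand Mp_def Hp_def by simp
  also have "(?A - K$1$1) * (?D - K$2$2) - (?B - K$1$2) * (?C - K$2$1) = poly (Pk K) r"
    by (rule det_Pk[OF dK])
  finally show "poly (Pk K) lam = poly ([:poly (Pk K) r:] + [:r, -1:] * Mp K r + [:r, -1:]^2 * Hp r) lam"
    by (simp add: algebra_simps)
qed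

lemma pd_form:
  fixes r x1 x2 :: real
  assumes "(x1, x2) \<noteq> (0,0)"
  shows "x1^2 * poly (G11p r) r + 2 * x1 * x2 * poly (G12p r) r + x2^2 * poly (G22p r) r > 0"
proof -
  let ?y = "\<lambda>k. fst (Yr r x1 x2 k)"
  have eq: "x1^2 * poly (G11p r) r + 2 * x1 * x2 * poly (G12p r) r + x2^2 * poly (G22p r) r =
     (\<Sum>k\<in>{1..N}. w k * (?y k)^2)"
  proof -
    have "x1^2 * poly (G11p r) r + 2 * x1 * x2 * poly (G12p r) r + x2^2 * poly (G22p r) r =
       (\<Sum>k\<in>{1..N}. x1^2 * (w k * poly (thp k) r * poly (thp k) r) + 2 * x1 * x2 * (w k * poly (thp k) r * poly (php k) r)
          + x2^2 * (w k * poly (php k) r * poly (php k) r))"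
      by (simp add: G11p_def G12p_def G22p_def poly_sum sum.distrib sum_distrib_left)
    also have "\<dots> = (\<Sum>k\<in>{1..N}. w k * (?y k)^2)"
      by (rule sum.cong) (simp_all add: fst_Yr power2_eq_square algebra_simps)
    finally show ?thesis .
  qed
  have w1: "w 1 > 0" and w2: "w 2 > 0" using wpos N2 by auto
  have f0: "f 0 \<noteq> 0" and f1: "f 1 \<noteq> 0" using fnz N2 by auto
  have ne: "?y 1 \<noteq> 0 \<or> ?y 2 \<noteq> 0"
  proof (rule ccontr)
    assume "\<not> ?thesis"
    then have y1: "?y 1 = 0" and y2: "?y 2 = 0" by auto
    have y1e: "?y 1 = x1 + x2 / f 0" by (simp add: Let_def)
    have "?y 2 = ?y 1 + snd (Yr r x1 x2 1) / f 1" by (simp add: Let_def numeral_2_eq_2)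
    then have "snd (Yr r x1 x2 1) = 0" using y1 y2 f1 by simp
    moreover have "snd (Yr r x1 x2 1) = x2 + (q 1 - r * w 1) * ?y 1" by (simp add: Let_def)
    ultimately have "x2 = 0" using y1 by simp
    then show False using y1 y1e assms by simp
  qed
  have "w 1 * (?y 1)^2 + w 2 * (?y 2)^2 > 0"
    using ne w1 w2 by (auto intro: add_pos_nonneg add_nonneg_pos)
  also have "w 1 * (?y 1)^2 + w 2 * (?y 2)^2 = (\<Sum>k\<in>{1,2}. w k * (?y k)^2)" by simp
  also have "\<dots> \<le> (\<Sum>k\<in>{1..N}. w k * (?y k)^2)"
    by (rule sum_mono2) (use N2 in \<open>auto intro!: mult_nonneg_nonneg order.strict_implies_order[OF wpos]\<close>)
  finally show ?thesis unfolding eq .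
qed

lemma G_sym: "poly (G12p r) r = poly (G21p r) r"
  by (simp add: G12p_def G21p_def poly_sum mult_ac)

end


lemma order_factor:
  fixes r :: real
  assumes "p = [:-r, 1:]^n * H" "poly H r \<noteq> 0"
  shows "p \<noteq> 0" "order r p = n"
proof -
  have H: "H \<noteq> 0" using assms(2) by auto
  then show "p \<noteq> 0" using assms(1) by simp
  then show "order r p = n" using assms by (simp add: order_mult order_power_n_n order_0I)
qed

context slp begin

abbreviation "isK K r \<equiv> poly TY r = K$1$1 \<and> poly FY r = K$1$2 \<and> poly TU r = K$2$1 \<and> poly FU r = K$2$2"

lemma double_fact:
  assumes dK: "det K = 1" and iK: "isK K r"
  shows "Pk K = [:-r, 1:]^2 * Hp r" "poly (Hp r) r > 0"
proof -
  have p0: "poly (Pk K) r = 0" using det_Pk[OF dK, of r] iK by simp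
  have m0: "Mp K r = 0" using iK by (simp add: Mp_def)
  have sq: "[:r, -1:]^2 = [:-r, 1:]^2" by (simp add: power2_eq_square)
  show "Pk K = [:-r, 1:]^2 * Hp r" using Pk_expand[OF dK, of r] p0 m0 sq by simp
  let ?A = "poly TY r" and ?B = "poly FY r" and ?C = "poly TU r" and ?D = "poly FU r"
  let ?G11 = "poly (G11p r) r" and ?G12 = "poly (G12p r) r" and ?G22 = "poly (G22p r) r"
  have "poly (Hp r) r = (?B * ?G11 - ?A * ?G12) * (?D * ?G12 - ?C * ?G22) - (?B * ?G12 - ?A * ?G22) * (?D * ?G11 - ?C * ?G12)"
    by (simp add: Hp_def E11p_def E12p_def E21p_def E22p_def G_sym)
  also have "\<dots> = (?A * ?D - ?B * ?C) * (?G11 * ?G22 - ?G12 * ?G12)" by (simp add: algebra_simps)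
  also have "\<dots> = ?G11 * ?G22 - ?G12 * ?G12" using wronski[of r] by simp
  also have "\<dots> > 0" by (rule det_pos) (rule pd_form)
  finally show "poly (Hp r) r > 0" .
qed

lemma simple_fact:
  assumes dK: "det K = 1" and p0: "poly (Pk K) r = 0" and nK: "\<not> isK K r"
  shows "Pk K = [:-r, 1:] * (- (Mp K r + [:r, -1:] * Hp r))" "poly (- (Mp K r + [:r, -1:] * Hp r)) r \<noteq> 0"
proof -
  show "Pk K = [:-r, 1:] * (- (Mp K r + [:r, -1:] * Hp r))"
  proof -
    have "[:poly (Pk K) r:] + [:r, -1:] * Mp K r + [:r, -1:]^2 * Hp r = [:-r, 1:] * (- (Mp K r + [:r, -1:] * Hp r))"
      by (rule poly_eq_poly_eq_iff[THEN iffD1]) (auto simp: p0 fun_eq_iff algebra_simps power2_eq_square)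
    then show ?thesis using Pk_expand[OF dK, of r] by simp
  qed
  let ?A = "poly TY r" and ?B = "poly FY r" and ?C = "poly TU r" and ?D = "poly FU r"
  let ?G11 = "poly (G11p r) r" and ?G12 = "poly (G12p r) r" and ?G22 = "poly (G22p r) r"
  have hk: "K$1$1 * K$2$2 - K$1$2 * K$2$1 = 1" using dK by (simp add: det_2)
  have hg: "(?A - K$1$1) * (?D - K$2$2) - (?B - K$1$2) * (?C - K$2$1) = 0" using det_Pk[OF dK, of r] p0 by simp
  have nz: "(?A - K$1$1) * (?D * ?G12 - ?C * ?G22) + (?D - K$2$2) * (?B * ?G11 - ?A * ?G12)
        - (?B - K$1$2) * (?D * ?G11 - ?C * ?G12) - (?C - K$2$1) * (?B * ?G12 - ?A * ?G22) \<noteq> 0"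
    by (rule mix_nz[OF wronski hk hg nK]) (rule pd_form)
  have "poly (Mp K r) r = (?A - K$1$1) * (?D * ?G12 - ?C * ?G22) + (?D - K$2$2) * (?B * ?G11 - ?A * ?G12)
        - (?B - K$1$2) * (?D * ?G11 - ?C * ?G12) - (?C - K$2$1) * (?B * ?G12 - ?A * ?G22)"
    by (simp add: Mp_def E11p_def E12p_def E21p_def E22p_def G_sym)
  then show "poly (- (Mp K r + [:r, -1:] * Hp r)) r \<noteq> 0" using nz by simp
qed

lemma order_is_mult:
  assumes dK: "det K = 1" and p0: "poly (Pk K) r = 0"
  shows "Pk K \<noteq> 0" "order r (Pk K) = multiplicity_ev N f q w K (- mat 1) r"
proof -
  have "Pk K \<noteq> 0 \<and> order r (Pk K) = multiplicity_ev N f q w K (- mat 1) r"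
  proof (cases "isK K r")
    case True
    note d = double_fact[OF dK True]
    have "Pk K \<noteq> 0" "order r (Pk K) = 2" using order_factor[OF d(1)] d(2) by auto
    then show ?thesis using True by (simp add: mult_eq[OF dK])
  next
    case False
    note s = simple_fact[OF dK p0 False]
    have "Pk K = [:-r, 1:]^1 * (- (Mp K r + [:r, -1:] * Hp r))" using s(1) by simp
    from order_factor[OF this s(2)] have "Pk K \<noteq> 0" "order r (Pk K) = 1" by auto
    then show ?thesis using False p0 by (simp add: mult_eq[OF dK])
  qed
  then show "Pk K \<noteq> 0" "order r (Pk K) = multiplicity_ev N f q w K (- mat 1) r" by auto
qed

end


lemma ker_nonzero:
  fixes d11 d12 d21 d22 :: "'a::field"
  assumes "d11 * d22 - d12 * d21 = 0"
  shows "\<exists>a c. (a, c) \<noteq> (0, 0) \<and> d11 * a + d12 * c = 0 \<and> d21 * a + d22 * c = 0"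
proof (cases "d11 = 0 \<and> d12 = 0")
  case False
  have "d21 * d12 + d22 * - d11 = - (d11 * d22 - d12 * d21)" by (simp add: algebra_simps)
  then show ?thesis using False assms by (intro exI[of _ d12] exI[of _ "- d11"]) (auto simp: algebra_simps)
next
  case T: True
  show ?thesis
  proof (cases "d21 = 0 \<and> d22 = 0")
    case True then show ?thesis using T by (intro exI[of _ 1] exI[of _ 0]) auto
  next
    case False then show ?thesis using T by (intro exI[of _ d22] exI[of _ "- d21"]) (auto simp: algebra_simps)
  qed
qed

lemma Ys_cnj: "Ys f q w (cnj z) (cnj a) (cnj c) n = (cnj (fst (Ys f q w z a c n)), cnj (snd (Ys f q w z a c n)))"
  by (induction n) (auto simp: Let_def)

context slp begin

lemma ev_Pk: "ev z (Pk K) = 2 - (of_real (K$2$2) * ev z TY - of_real (K$1$2) * ev z TU - of_real (K$2$1) * ev z FY + of_real (K$1$1) * ev z FU)"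
  by (simp add: Pk_def gp_def)

lemma YcN: "Ys f q w z a c N = (a * ev z TY + c * ev z FY, a * ev z TU + c * ev z FU)"
  using Ys_link[of f q w z a c N] by (simp add: TY_def TU_def FY_def FU_def)

lemma wronski_c: "ev z TY * ev z FU - ev z FY * ev z TU = (1 :: 'a :: real_field)"
  using Ys_wronski[of f q w z N] YcN[of z 1 0] YcN[of z 0 1] by simp

lemma roots_real:
  assumes dK: "det K = 1" and z: "poly (map_poly of_real (Pk K)) (z :: complex) = 0"
  shows "z \<in> \<real>"
proof -
  let ?k11 = "of_real (K$1$1) :: complex" and ?k12 = "of_real (K$1$2) :: complex"
  let ?k21 = "of_real (K$2$1) :: complex" and ?k22 = "of_real (K$2$2) :: complex"
  have hk: "K$1$1 * K$2$2 - K$1$2 * K$2$1 = 1" using dK by (simp add: det_2)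
  then have hkc: "?k11 * ?k22 - ?k12 * ?k21 = 1" by (metis of_real_1 of_real_diff of_real_mult)
  have e0: "ev z (Pk K) = 0" using z by (simp add: ev_def)
  have wr: "ev z TY * ev z FU - ev z FY * ev z TU = 1" by (rule wronski_c)
  have "(ev z TY - ?k11) * (ev z FU - ?k22) - (ev z FY - ?k12) * (ev z TU - ?k21) = ev z (Pk K)"
    unfolding ev_Pk using wr hkc by (simp add: algebra_simps)
  then obtain a c where ac: "(a, c) \<noteq> (0, 0)" and k1: "(ev z TY - ?k11) * a + (ev z FY - ?k12) * c = 0"
      and k2: "(ev z TU - ?k21) * a + (ev z FU - ?k22) * c = 0"
    using ker_nonzero e0 by metis
  let ?Y = "Ys f q w z a c" and ?Z = "Ys f q w (cnj z) (cnj a) (cnj c)"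
  have YN1: "fst (?Y N) = ?k11 * a + ?k12 * c" using k1 unfolding YcN by (simp add: algebra_simps)
  have YN2: "snd (?Y N) = ?k21 * a + ?k22 * c" using k2 unfolding YcN by (simp add: algebra_simps)
  have ZN1: "fst (?Z N) = ?k11 * cnj a + ?k12 * cnj c" unfolding Ys_cnj YN1 by simp
  have ZN2: "snd (?Z N) = ?k21 * cnj a + ?k22 * cnj c" unfolding Ys_cnj YN2 by simp
  have gr: "fst (?Z N) * snd (?Y N) - snd (?Z N) * fst (?Y N) - (cnj a * c - cnj c * a) =
     (cnj z - z) * (\<Sum>k\<in>{1..N}. of_real (w k) * fst (?Y k) * fst (?Z k))"
    by (rule Ys_green)
  have "fst (?Z N) * snd (?Y N) - snd (?Z N) * fst (?Y N) = (?k11 * ?k22 - ?k12 * ?k21) * (cnj a * c - cnj c * a)"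
    unfolding YN1 YN2 ZN1 ZN2 by (simp add: algebra_simps)
  then have lhs0: "fst (?Z N) * snd (?Y N) - snd (?Z N) * fst (?Y N) - (cnj a * c - cnj c * a) = 0"
    using hkc by simp
  let ?R = "\<Sum>k\<in>{1..N}. w k * (cmod (fst (?Y k)))^2"
  have S: "(\<Sum>k\<in>{1..N}. of_real (w k) * fst (?Y k) * fst (?Z k)) = of_real ?R"
    unfolding of_real_sum
  proof (rule sum.cong)
    fix k
    have "fst (?Y k) * cnj (fst (?Y k)) = of_real ((cmod (fst (?Y k)))^2)" by (rule complex_norm_square[symmetric])
    then show "of_real (w k) * fst (?Y k) * fst (?Z k) = of_real (w k * (cmod (fst (?Y k)))^2)"
      unfolding Ys_cnj by (simp add: mult.assoc)
  qed simp
  have w1: "w 1 > 0" and w2: "w 2 > 0" using wpos N2 by auto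
  have f1: "f 1 \<noteq> 0" using fnz N2 by auto
  have ne: "fst (?Y 1) \<noteq> 0 \<or> fst (?Y 2) \<noteq> 0"
  proof (rule ccontr)
    assume "\<not> ?thesis"
    then have y1: "fst (?Y 1) = 0" and y2: "fst (?Y 2) = 0" by auto
    have y1e: "fst (?Y 1) = a + c * of_real (1 / f 0)" by (simp add: Let_def)
    have "fst (?Y 2) = fst (?Y 1) + snd (?Y 1) * of_real (1 / f 1)" by (simp add: Let_def numeral_2_eq_2)
    then have "snd (?Y 1) = 0" using y1 y2 f1 by simp
    moreover have "snd (?Y 1) = c + (of_real (q 1) - z * of_real (w 1)) * fst (?Y 1)" by (simp add: Let_def)
    ultimately have "c = 0" using y1 by simp
    then show False using y1 y1e ac by simp
  qed
  have "w 1 * (cmod (fst (?Y 1)))^2 + w 2 * (cmod (fst (?Y 2)))^2 > 0"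
    using ne w1 w2 by (auto intro: add_pos_nonneg add_nonneg_pos)
  also have "w 1 * (cmod (fst (?Y 1)))^2 + w 2 * (cmod (fst (?Y 2)))^2 = (\<Sum>k\<in>{1,2}. w k * (cmod (fst (?Y k)))^2)" by simp
  also have "\<dots> \<le> ?R"
    by (rule sum_mono2) (use N2 in \<open>auto intro!: mult_nonneg_nonneg order.strict_implies_order[OF wpos]\<close>)
  finally have Rpos: "?R > 0" .
  have "(cnj z - z) * of_real ?R = 0" using gr lhs0 S by simp
  moreover have "(of_real ?R :: complex) \<noteq> 0" using Rpos by (simp only: of_real_eq_0_iff)
  ultimately have "cnj z - z = 0" by (simp only: mult_eq_0_iff) simp
  then have "cnj z = z" by simp
  then show "z \<in> \<real>" using Reals_cnj_iff by blast
qed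

end


lemma real_factor:
  fixes p :: "real poly"
  assumes "\<And>z::complex. poly (map_poly of_real p) z = 0 \<Longrightarrow> z \<in> \<real>" and "p \<noteq> 0"
  shows "p = smult (lead_coeff p) (\<Prod>x\<in>#proots p. [:-x, 1:]) \<and> size (proots p) = degree p"
proof -
  have "(\<forall>z::complex. poly (map_poly of_real p) z = 0 \<longrightarrow> z \<in> \<real>) \<longrightarrow> p \<noteq> 0 \<longrightarrow>
        p = smult (lead_coeff p) (\<Prod>x\<in>#proots p. [:-x, 1:]) \<and> size (proots p) = degree p"
  proof (induction p rule: poly_root_induct[where P="\<lambda>_. True"])
    case 0 then show ?case by simp
  next
    case (no_roots p)
    show ?case
    proof (intro impI)
      assume R: "\<forall>z::complex. poly (map_poly of_real p) z = 0 \<longrightarrow> z \<in> \<real>" and p0: "p \<noteq> 0"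
      have "degree p = 0"
      proof (rule ccontr)
        assume "degree p \<noteq> 0"
        moreover have "degree (map_poly (of_real :: real \<Rightarrow> complex) p) = degree p"
          by (rule degree_map_poly) simp
        ultimately have "\<not> constant (poly (map_poly (of_real :: real \<Rightarrow> complex) p))"
          by (simp add: constant_degree)
        then obtain z :: complex where z: "poly (map_poly of_real p) z = 0"
          using fundamental_theorem_of_algebra by blast
        then have "z \<in> \<real>" using R by blast
        then obtain x where x: "z = of_real x" by (auto elim: Reals_cases)
        have "of_real (poly p x) = (0::complex)" using z unfolding x ev_of_real[symmetric] ev_def .
        then have "poly p x = 0" by simp
        then show False using no_roots by blast
      qed
      then obtain c where c: "p = [:c:]" by (metis degree_eq_zeroE)
      then show "p = smult (lead_coeff p) (\<Prod>x\<in>#proots p. [:-x, 1:]) \<and> size (proots p) = degree p"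
        by simp
    qed
  next
    case (root a p)
    show ?case
    proof (intro impI)
      assume R: "\<forall>z::complex. poly (map_poly of_real ([:a, -1:] * p)) z = 0 \<longrightarrow> z \<in> \<real>"
        and p0: "[:a, -1:] * p \<noteq> 0"
      have pn: "p \<noteq> 0" using p0 by auto
      have Rp: "\<forall>z::complex. poly (map_poly of_real p) z = 0 \<longrightarrow> z \<in> \<real>"
      proof (intro allI impI)
        fix z :: complex assume "poly (map_poly of_real p) z = 0"
        then have "ev z p = 0" by (simp add: ev_def)
        then have "ev z ([:a, -1:] * p) = 0" by (simp only: ev_mult) simp
        then show "z \<in> \<real>" using R by (simp add: ev_def)
      qed
      from root.IH Rp pn have IH: "p = smult (lead_coeff p) (\<Prod>x\<in>#proots p. [:-x, 1:])" "size (proots p) = degree p"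
        by auto
      have l: "[:a, -1:] = - [:-a, 1:]" by simp
      have pa: "proots [:a, -1:] = {#a#}" by (subst l, subst proots_uminus) simp
      have pr: "proots ([:a, -1:] * p) = add_mset a (proots p)"
        using pn by (subst proots_mult) (simp_all add: pa)
      have lc: "lead_coeff ([:a, -1:] * p) = - lead_coeff p" by (simp only: lead_coeff_mult) simp
      define P where "P = (\<Prod>x\<in>#proots p. [:-x, 1:])"
      define L where "L = lead_coeff p"
      have pe: "p = smult L P" using IH(1) unfolding P_def L_def .
      have "[:a, -1:] * p = [:a, -1:] * smult L P" by (simp only: pe)
      also have "\<dots> = smult (- L) ([:-a, 1:] * P)"
        by (rule poly_eq_poly_eq_iff[THEN iffD1]) (auto simp: fun_eq_iff algebra_simps)
      also have "\<dots> = smult (lead_coeff ([:a, -1:] * p)) (\<Prod>x\<in>#proots ([:a, -1:] * p). [:-x, 1:])"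
        unfolding pr lc P_def L_def by simp
      finally have "[:a, -1:] * p = smult (lead_coeff ([:a, -1:] * p)) (\<Prod>x\<in>#proots ([:a, -1:] * p). [:-x, 1:])" .
      moreover have "size (proots ([:a, -1:] * p)) = degree ([:a, -1:] * p)"
      proof -
        have "degree ([:a, -1:] * p) = degree [:a, -1:] + degree p" using pn by (rule degree_mult_eq[rotated]) simp
        then show ?thesis unfolding pr using IH(2) by simp
      qed
      ultimately show "[:a, -1:] * p = smult (lead_coeff ([:a, -1:] * p)) (\<Prod>x\<in>#proots ([:a, -1:] * p). [:-x, 1:]) \<and>
          size (proots ([:a, -1:] * p)) = degree ([:a, -1:] * p)" by simp
    qed
  qed
  then show ?thesis using assms by blast
qed



lemma coeff_lin_mult: "coeff ([:x, y:] * p) (Suc n) = x * coeff p (Suc n) + y * coeff p n"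
  by (simp add: mult_pCons_left)

lemma prod_neg_ivl: "(\<Prod>i\<in>{1..n}. - (g i :: real)) = (-1)^n * (\<Prod>i\<in>{1..n}. g i)"
  by (induction n) (auto simp: atLeastAtMostSuc_conv)

lemma deg_lin_mult: "degree ([:x, y:] * p) \<le> Suc (degree p)"
proof -
  have "degree ([:x, y:] * p) \<le> degree [:x, y:] + degree p" by (rule degree_mult_le)
  moreover have "degree [:x, y:] \<le> 1" by (simp add: degree_pCons_eq_if)
  ultimately show ?thesis by linarith
qed

lemma Pp_deg:
  "degree (fst (Pp f q w a c (Suc m))) \<le> m \<and>
   coeff (fst (Pp f q w a c (Suc m))) m = (a + c / f 0) * (\<Prod>i\<in>{1..m}. - w i / f i) \<and>
   degree (snd (Pp f q w a c (Suc m))) \<le> Suc m \<and>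
   coeff (snd (Pp f q w a c (Suc m))) (Suc m) = (a + c / f 0) * (\<Prod>i\<in>{1..m}. - w i / f i) * (- w (Suc m))"
proof (induction m)
  case 0
  have y: "fst (Pp f q w a c (Suc 0)) = [:a + c / f 0:]" by (simp add: Let_def)
  have u: "snd (Pp f q w a c (Suc 0)) = [:c:] + [:q 1, - w 1:] * [:a + c / f 0:]" by (simp add: Let_def)
  have "degree ([:q 1, - w 1:] * [:a + c / f 0:]) \<le> 1"
    using degree_mult_le[of "[:q 1, - w 1:]" "[:a + c / f 0:]"] by simp
  then have "degree (snd (Pp f q w a c (Suc 0))) \<le> 1" unfolding u
    by (intro degree_add_le) auto
  moreover have "coeff (snd (Pp f q w a c (Suc 0))) 1 = (a + c / f 0) * (- w 1)"
    unfolding u using coeff_lin_mult[of "q 1" "- w 1" "[:a + c / f 0:]" 0] by simp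
  ultimately show ?case using y by simp
next
  case (Suc m)
  define y where "y = fst (Pp f q w a c (Suc m))"
  define u where "u = snd (Pp f q w a c (Suc m))"
  define P where "P = (a + c / f 0) * (\<Prod>i\<in>{1..m}. - w i / f i)"
  have dy: "degree y \<le> m" and cy: "coeff y m = P" and du: "degree u \<le> Suc m"
    and cu: "coeff u (Suc m) = P * (- w (Suc m))"
    using Suc unfolding y_def u_def P_def by auto
  have y2: "fst (Pp f q w a c (Suc (Suc m))) = y + smult (1 / f (Suc m)) u"
    by (simp add: Let_def y_def u_def)
  have u2: "snd (Pp f q w a c (Suc (Suc m))) = u + [:q (Suc (Suc m)), - w (Suc (Suc m)):] * (y + smult (1 / f (Suc m)) u)"
    by (simp add: Let_def y_def u_def)
  have dy2: "degree (y + smult (1 / f (Suc m)) u) \<le> Suc m"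
    using dy du by (intro degree_add_le order_trans[OF degree_smult_le]) auto
  have pr: "(\<Prod>i\<in>{1..Suc m}. - w i / f i) = (\<Prod>i\<in>{1..m}. - w i / f i) * (- w (Suc m) / f (Suc m))"
    by (simp add: atLeastAtMostSuc_conv mult.commute)
  have cy2: "coeff (y + smult (1 / f (Suc m)) u) (Suc m) = (a + c / f 0) * (\<Prod>i\<in>{1..Suc m}. - w i / f i)"
    using dy cu unfolding pr P_def by (simp add: coeff_eq_0)
  have "degree ([:q (Suc (Suc m)), - w (Suc (Suc m)):] * (y + smult (1 / f (Suc m)) u)) \<le> Suc (Suc m)"
    using deg_lin_mult[of "q (Suc (Suc m))" "- w (Suc (Suc m))" "y + smult (1 / f (Suc m)) u"] dy2 by linarith
  then have du2: "degree (snd (Pp f q w a c (Suc (Suc m)))) \<le> Suc (Suc m)"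
    unfolding u2 using du by (intro degree_add_le) auto
  have "coeff (snd (Pp f q w a c (Suc (Suc m)))) (Suc (Suc m)) =
     - w (Suc (Suc m)) * coeff (y + smult (1 / f (Suc m)) u) (Suc m)"
    unfolding u2 coeff_add coeff_lin_mult using du dy dy2 by (simp add: coeff_eq_0)
  then have cu2: "coeff (snd (Pp f q w a c (Suc (Suc m)))) (Suc (Suc m)) =
     (a + c / f 0) * (\<Prod>i\<in>{1..Suc m}. - w i / f i) * (- w (Suc (Suc m)))"
    using cy2 by simp
  show ?case using dy2 cy2 du2 cu2 y2 by simp
qed

context slp begin

definition "Qc = (1 / f 0) * (\<Prod>i\<in>{1..N-1}. - w i / f i) * (- w N)"

lemma gp_deg: "degree (gp K) \<le> N" "coeff (gp K) N = (K$1$1 - f 0 * K$1$2) * Qc"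
proof -
  obtain M where M: "N = Suc M" using N2 by (cases N) auto
  have a: "degree TY \<le> M" "degree TU \<le> N" "coeff TU N = (\<Prod>i\<in>{1..M}. - w i / f i) * (- w N)"
    using Pp_deg[of f q w 1 0 M, folded M] unfolding TY_def TU_def by auto
  have b: "degree FY \<le> M" "degree FU \<le> N" "coeff FU N = (1 / f 0) * (\<Prod>i\<in>{1..M}. - w i / f i) * (- w N)"
    using Pp_deg[of f q w 0 1 M, folded M] unfolding FY_def FU_def by auto
  have "degree (gp K) \<le> N" unfolding gp_def using a b M
    by (intro degree_add_le degree_diff_le order_trans[OF degree_smult_le]) auto
  then show "degree (gp K) \<le> N" .
  have "coeff TY N = 0" "coeff FY N = 0" using a(1) b(1) M by (auto intro: coeff_eq_0)
  then show "coeff (gp K) N = (K$1$1 - f 0 * K$1$2) * Qc"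
  proof -
    have NM: "N - 1 = M" using M by simp
    have "coeff (gp K) N = - K$1$2 * coeff TU N + K$1$1 * coeff FU N"
      unfolding gp_def using \<open>coeff TY N = 0\<close> \<open>coeff FY N = 0\<close> by simp
    also have "\<dots> = (K$1$1 - f 0 * K$1$2) * Qc"
      unfolding a(3) b(3) Qc_def NM using fnz[of 0] by (simp add: field_simps)
    finally show ?thesis .
  qed
qed

lemma Qc_sign:
  assumes hp: "(\<Prod>i = 0..N - 1. 1 / f i) > 0"
  shows "(-1)^N * Qc > 0"
proof -
  obtain M where M: "N = Suc M" using N2 by (cases N) auto
  have NM: "N - 1 = M" using M by simp
  have e1: "(\<Prod>i\<in>{1..M}. - w i / f i) = (\<Prod>i\<in>{1..M}. - w i) * (\<Prod>i\<in>{1..M}. 1 / f i)"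
    by (simp add: prod.distrib[symmetric] divide_inverse)
  have e2: "(1 / f 0) * (\<Prod>i\<in>{1..M}. 1 / f i) = (\<Prod>i = 0..N - 1. 1 / f i)"
    unfolding NM by (simp add: prod.atLeast_Suc_atMost)
  have e3: "(\<Prod>i\<in>{1..M}. - w i) * (- w N) = (\<Prod>i\<in>{1..N}. - w i)"
    using M by (simp add: atLeastAtMostSuc_conv mult.commute)
  have e4: "(\<Prod>i\<in>{1..N}. - w i) = (-1)^N * (\<Prod>i\<in>{1..N}. w i)"
    by (rule prod_neg_ivl)
  have "Qc = ((1 / f 0) * (\<Prod>i\<in>{1..M}. 1 / f i)) * ((\<Prod>i\<in>{1..M}. - w i) * (- w N))"
    unfolding Qc_def NM e1 by (simp only: mult_ac)
  also have "\<dots> = (\<Prod>i = 0..N - 1. 1 / f i) * ((-1)^N * (\<Prod>i\<in>{1..N}. w i))"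
    unfolding e2 e3 e4 ..
  finally have "(-1)^N * Qc = (\<Prod>i = 0..N - 1. 1 / f i) * (\<Prod>i\<in>{1..N}. w i)"
    by (simp add: algebra_simps power_mult_distrib[symmetric])
  moreover have "(\<Prod>i\<in>{1..N}. w i) > 0" by (rule prod_pos) (use wpos in auto)
  ultimately show ?thesis using hp by simp
qed

lemma Pk_lead:
  assumes "K$1$1 - f 0 * K$1$2 \<noteq> 0" "Qc \<noteq> 0"
  shows "Pk K \<noteq> 0" "degree (Pk K) = N" "lead_coeff (Pk K) = - ((K$1$1 - f 0 * K$1$2) * Qc)"
proof -
  have c: "coeff (Pk K) N = - ((K$1$1 - f 0 * K$1$2) * Qc)" using N2 gp_deg(2)[of K]
    by (simp add: Pk_def coeff_pCons split: nat.splits)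
  have "degree (Pk K) \<le> N" unfolding Pk_def using gp_deg(1)[of K] N2
    by (intro degree_diff_le) auto
  moreover have "coeff (Pk K) N \<noteq> 0" using c assms by simp
  ultimately show d: "degree (Pk K) = N" by (simp add: le_antisym le_degree)
  show "Pk K \<noteq> 0" using \<open>coeff (Pk K) N \<noteq> 0\<close> by auto
  show "lead_coeff (Pk K) = - ((K$1$1 - f 0 * K$1$2) * Qc)" using c d by simp
qed

end


definition ltc :: "real list \<Rightarrow> real \<Rightarrow> nat" where
  "ltc L v = card {i. i < length L \<and> L ! i < v}"

lemma ltc_eq: "ltc L v = size (filter_mset (\<lambda>x. x < v) (mset L))"
  unfolding ltc_def by (simp add: length_filter_conv_card flip: mset_filter)

lemma lec_eq: "card {i. i < length L \<and> L ! i \<le> v} = ltc L v + count (mset L) v"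
proof -
  have "card {i. i < length L \<and> L ! i \<le> v} = size (filter_mset (\<lambda>x. x \<le> v) (mset L))"
    by (simp add: length_filter_conv_card flip: mset_filter)
  also have "filter_mset (\<lambda>x. x \<le> v) (mset L) = filter_mset (\<lambda>x. x < v) (mset L) + filter_mset (\<lambda>x. x = v) (mset L)"
    by (rule multiset_eqI) auto
  also have "size (filter_mset (\<lambda>x. x < v) (mset L) + filter_mset (\<lambda>x. x = v) (mset L)) = ltc L v + count (mset L) v"
    by (simp add: filter_eq_replicate_mset ltc_eq)
  finally show ?thesis .
qed

lemma ltc_lower: "sorted L \<Longrightarrow> i < length L \<Longrightarrow> L ! i < v \<Longrightarrow> i < ltc L v"
proof -
  assume s: "sorted L" and i: "i < length L" and v: "L ! i < v"
  have "{0..i} \<subseteq> {i. i < length L \<and> L ! i < v}"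
  proof
    fix j assume "j \<in> {0..i}"
    then have "j \<le> i" by simp
    then have "L ! j \<le> L ! i" using s i by (simp add: sorted_nth_mono)
    then show "j \<in> {i. i < length L \<and> L ! i < v}" using v i \<open>j \<le> i\<close> by auto
  qed
  then have "card {0..i} \<le> ltc L v" unfolding ltc_def by (rule card_mono[rotated]) simp
  then show ?thesis by simp
qed

lemma ltc_upper: "sorted L \<Longrightarrow> i < length L \<Longrightarrow> v \<le> L ! i \<Longrightarrow> ltc L v \<le> i"
proof -
  assume s: "sorted L" and i: "i < length L" and v: "v \<le> L ! i"
  have "{i. i < length L \<and> L ! i < v} \<subseteq> {0..<i}"
  proof
    fix j assume j: "j \<in> {i. i < length L \<and> L ! i < v}"
    show "j \<in> {0..<i}"
    proof (rule ccontr)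
      assume "j \<notin> {0..<i}"
      then have "i \<le> j" by simp
      then have "L ! i \<le> L ! j" using s j by (simp add: sorted_nth_mono)
      then show False using j v by simp
    qed
  qed
  then have "ltc L v \<le> card {0..<i}" unfolding ltc_def by (rule card_mono[rotated]) simp
  then show ?thesis by simp
qed

lemma lec_lower: "sorted L \<Longrightarrow> i < length L \<Longrightarrow> L ! i \<le> v \<Longrightarrow> i < ltc L v + count (mset L) v"
proof -
  assume s: "sorted L" and i: "i < length L" and v: "L ! i \<le> v"
  have "{0..i} \<subseteq> {i. i < length L \<and> L ! i \<le> v}"
  proof
    fix j assume "j \<in> {0..i}"
    then have "j \<le> i" by simp
    then have "L ! j \<le> L ! i" using s i by (simp add: sorted_nth_mono)
    then show "j \<in> {i. i < length L \<and> L ! i \<le> v}" using v i \<open>j \<le> i\<close> by auto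
  qed
  then have "card {0..i} \<le> card {i. i < length L \<and> L ! i \<le> v}" by (rule card_mono[rotated]) simp
  then show ?thesis unfolding lec_eq by simp
qed

lemma lec_upper: "sorted L \<Longrightarrow> i < length L \<Longrightarrow> v < L ! i \<Longrightarrow> ltc L v + count (mset L) v \<le> i"
proof -
  assume s: "sorted L" and i: "i < length L" and v: "v < L ! i"
  have "{i. i < length L \<and> L ! i \<le> v} \<subseteq> {0..<i}"
  proof
    fix j assume j: "j \<in> {i. i < length L \<and> L ! i \<le> v}"
    show "j \<in> {0..<i}"
    proof (rule ccontr)
      assume "j \<notin> {0..<i}"
      then have "i \<le> j" by simp
      then have "L ! i \<le> L ! j" using s j by (simp add: sorted_nth_mono)
      then show False using j v by simp
    qed
  qed
  then have "card {i. i < length L \<and> L ! i \<le> v} \<le> card {0..<i}" by (rule card_mono[rotated]) simp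
  then show ?thesis unfolding lec_eq by simp
qed

lemma lec_total: "ltc L v + count (mset L) v \<le> length L"
proof -
  have "card {i. i < length L \<and> L ! i \<le> v} \<le> card {0..<length L}" by (rule card_mono) auto
  then show ?thesis unfolding lec_eq by simp
qed

lemma H1: "sorted L \<Longrightarrow> Suc j < length L \<Longrightarrow> L ! j < L ! Suc j \<Longrightarrow> count (mset L) (L ! j) = 2 \<Longrightarrow>
    ltc L (L ! j) + 1 = j"
  using lec_upper[of L "Suc j" "L ! j"] lec_lower[of L j "L ! j"] by simp

lemma H2: "sorted L \<Longrightarrow> Suc j < length L \<Longrightarrow> L ! j < L ! Suc j \<Longrightarrow> ltc L (L ! Suc j) = Suc j"
  using ltc_lower[of L j "L ! Suc j"] ltc_upper[of L "Suc j" "L ! Suc j"] by simp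

lemma H3: "sorted L \<Longrightarrow> length L = Suc n \<Longrightarrow> count (mset L) (L ! n) = 2 \<Longrightarrow> ltc L (L ! n) + 2 = Suc n"
  using lec_lower[of L n "L ! n"] lec_total[of L "L ! n"] by simp

lemma H0: "sorted L \<Longrightarrow> 0 < length L \<Longrightarrow> ltc L (L ! 0) = 0"
  using ltc_upper[of L 0 "L ! 0"] by simp

lemma count_pos: "j < length L \<Longrightarrow> count (mset L) (L ! j) \<ge> 1"
  by (simp add: Suc_le_eq)



lemma prod_sign:
  fixes R :: "real multiset"
  shows "r \<notin># R \<Longrightarrow> (-1)^(size (filter_mset (\<lambda>x. r < x) R)) * (\<Prod>x\<in>#R. (r - x)) > 0"
proof (induction R)
  case empty then show ?case by simp
next
  case (add a R)
  then have IH: "(-1)^(size (filter_mset (\<lambda>x. r < x) R)) * (\<Prod>x\<in>#R. (r - x)) > 0" and ar: "a \<noteq> r" by auto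
  show ?case
  proof (cases "r < a")
    case True
    have "(-1)^(size (filter_mset (\<lambda>x. r < x) (add_mset a R))) * (\<Prod>x\<in>#add_mset a R. (r - x)) =
       ((-1)^(size (filter_mset (\<lambda>x. r < x) R)) * (\<Prod>x\<in>#R. (r - x))) * (a - r)"
      using True by (simp add: algebra_simps)
    moreover have "((-1)^(size (filter_mset (\<lambda>x. r < x) R)) * (\<Prod>x\<in>#R. (r - x))) * (a - r) > 0"
      by (rule mult_pos_pos) (use IH True in auto)
    ultimately show ?thesis by linarith
  next
    case False
    then have "a < r" using ar by simp
    have "(-1)^(size (filter_mset (\<lambda>x. r < x) (add_mset a R))) * (\<Prod>x\<in>#add_mset a R. (r - x)) =
       ((-1)^(size (filter_mset (\<lambda>x. r < x) R)) * (\<Prod>x\<in>#R. (r - x))) * (r - a)"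
      using False by (simp add: algebra_simps)
    moreover have "((-1)^(size (filter_mset (\<lambda>x. r < x) R)) * (\<Prod>x\<in>#R. (r - x))) * (r - a) > 0"
      by (rule mult_pos_pos) (use IH \<open>a < r\<close> in auto)
    ultimately show ?thesis by linarith
  qed
qed

lemma neg_of_mult: "x * y < 0 \<Longrightarrow> (y::real) > 0 \<Longrightarrow> x < 0"
  by (auto simp: mult_less_0_iff)

lemma count_sum_rep: "finite E \<Longrightarrow> count (\<Sum>l\<in>E. replicate_mset (m l) l) x = (if x \<in> E then m x else 0)"
  by (simp add: count_sum sum.delta)

context slp begin

lemma side_facts:
  assumes dK: "det K = 1" and c: "K$1$1 - f 0 * K$1$2 \<noteq> 0" and hp: "(\<Prod>i = 0..N - 1. 1 / f i) > 0"
  defines "L \<equiv> sorted_list_of_multiset (proots (Pk K))"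
  shows "\<And>j. eig N f q w K (- mat 1) j = L ! j"
    and "\<And>x. simple_ev N f q w K (- mat 1) x \<longleftrightarrow> count (mset L) x = 1"
    and "length L = N" and "sorted L"
    and "\<And>x. count (mset L) x \<le> 2"
    and "\<And>x. count (mset L) x = 2 \<Longrightarrow> (-1)^(ltc L x) * (K$1$1 - f 0 * K$1$2) < 0"
    and "has_n_eigenvalues N f q w K (- mat 1) N"
proof -
  have Qc: "Qc \<noteq> 0" using Qc_sign[OF hp] by auto
  note pl = Pk_lead[OF c Qc]
  let ?p = "Pk K" let ?R = "proots (Pk K)"
  have E: "eigenvalues N f q w K (- mat 1) = {x. poly ?p x = 0}"
    unfolding eigenvalues_def using is_ev_iff[OF dK] by auto
  have fin: "finite (eigenvalues N f q w K (- mat 1))" unfolding E using pl(1) by (rule poly_roots_finite)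
  have cnt: "count ?R x = (if poly ?p x = 0 then multiplicity_ev N f q w K (- mat 1) x else 0)" for x
    using order_is_mult[OF dK, of x] pl(1) by (auto simp: order_0I)
  have em: "eig_mset N f q w K (- mat 1) = ?R"
  proof (rule multiset_eqI)
    fix x show "count (eig_mset N f q w K (- mat 1)) x = count ?R x"
      unfolding eig_mset_def count_sum_rep[OF fin] cnt unfolding E by simp
  qed
  have rf: "?p = smult (lead_coeff ?p) (\<Prod>x\<in>#?R. [:-x, 1:]) \<and> size ?R = degree ?p"
    by (rule real_factor[OF roots_real[OF dK] pl(1)])
  have mL: "mset L = ?R" unfolding L_def by simp
  show "\<And>j. eig N f q w K (- mat 1) j = L ! j" unfolding eig_def em L_def ..
  show "length L = N" using rf pl(2) by (metis mL size_mset)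
  show "sorted L" unfolding L_def by simp
  show "has_n_eigenvalues N f q w K (- mat 1) N"
    unfolding has_n_eigenvalues_def em using fin rf pl(2) by simp
  have le2: "multiplicity_ev N f q w K (- mat 1) x \<le> 2" for x by (simp add: mult_eq[OF dK])
  show "\<And>x. count (mset L) x \<le> 2" unfolding mL cnt using le2 by simp
  show "\<And>x. simple_ev N f q w K (- mat 1) x \<longleftrightarrow> count (mset L) x = 1"
    unfolding simple_ev_def mL cnt is_ev_iff[OF dK] by auto
  fix r assume c2: "count (mset L) r = 2"
  then have root: "poly ?p r = 0" and m2: "multiplicity_ev N f q w K (- mat 1) r = 2"
    unfolding mL cnt by (auto split: if_splits)
  have iK: "isK K r" using m2 by (simp add: mult_eq[OF dK] split: if_splits)
  note db = double_fact[OF dK iK]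
  define R' where "R' = ?R - {#r, r#}"
  have RR: "?R = add_mset r (add_mset r R')"
  proof (rule multiset_eqI)
    fix x
    have "count ?R r = 2" using c2 unfolding mL .
    then show "count ?R x = count (add_mset r (add_mset r R')) x" unfolding R'_def by auto
  qed
  have rR': "r \<notin># R'" using c2 unfolding mL R'_def by (simp add: not_in_iff)
  define Pi where "Pi = (\<Prod>x\<in>#R'. [:-x, 1:])"
  have "[:-r, 1:]^2 * Hp r = [:-r, 1:]^2 * smult (lead_coeff ?p) Pi"
  proof -
    have "[:-r, 1:]^2 * Hp r = ?p" using db(1) by simp
    also have "\<dots> = smult (lead_coeff ?p) (\<Prod>x\<in>#?R. [:-x, 1:])" using rf by simp
    also have "\<dots> = [:-r, 1:]^2 * smult (lead_coeff ?p) Pi" unfolding RR Pi_def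
      by (rule poly_eq_poly_eq_iff[THEN iffD1]) (simp add: fun_eq_iff poly_prod_mset algebra_simps power2_eq_square)
    finally show ?thesis .
  qed
  moreover have nz: "[:-r, 1:]^2 \<noteq> (0::real poly)" by simp
  ultimately have "Hp r = smult (lead_coeff ?p) Pi" using mult_left_cancel[OF nz] by blast
  then have Hr: "poly (Hp r) r = lead_coeff ?p * (\<Prod>x\<in>#R'. (r - x))"
    by (simp add: Pi_def poly_prod_mset)
  define lt where "lt = size (filter_mset (\<lambda>x. x < r) R')"
  define gt where "gt = size (filter_mset (\<lambda>x. r < x) R')"
  have ltL: "ltc L r = lt" unfolding ltc_eq mL lt_def RR by simp
  have sz: "size R' + 2 = N" using rf pl(2) unfolding RR by simp
  have part: "size R' = lt + gt"
  proof -
    have "R' = filter_mset (\<lambda>x. x < r) R' + filter_mset (\<lambda>x. r < x) R'"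
      using rR' by (intro multiset_eqI) (auto simp: not_in_iff)
    then show ?thesis unfolding lt_def gt_def by (metis size_union)
  qed
  have sg: "(-1)^gt * (\<Prod>x\<in>#R'. (r - x)) > 0" unfolding gt_def by (rule prod_sign[OF rR'])
  have qs: "(-1)^N * Qc > 0" by (rule Qc_sign[OF hp])
  have even: "even (lt + N + gt)" using sz part by presburger
  have pw: "((-1::real)^lt) * ((-1)^N * (-1)^gt) = 1"
  proof -
    from even obtain k where k: "lt + N + gt = 2 * k" by (rule evenE)
    have "((-1::real)^lt) * ((-1)^N * (-1)^gt) = (-1)^(lt + N + gt)" by (simp add: power_add)
    also have "\<dots> = 1" unfolding k by (simp add: power_mult)
    finally show ?thesis .
  qed
  have "(-1)^lt * (K$1$1 - f 0 * K$1$2) * (((-1)^N * Qc) * ((-1)^gt * (\<Prod>x\<in>#R'. (r - x)))) =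
      ((-1::real)^lt * ((-1)^N * (-1)^gt)) * ((K$1$1 - f 0 * K$1$2) * Qc * (\<Prod>x\<in>#R'. (r - x)))"
    by (simp add: algebra_simps)
  also have "\<dots> = - poly (Hp r) r" unfolding pw Hr pl(3) by simp
  finally have "(-1)^lt * (K$1$1 - f 0 * K$1$2) * (((-1)^N * Qc) * ((-1)^gt * (\<Prod>x\<in>#R'. (r - x)))) < 0"
    using db(2) by simp
  moreover have "((-1)^N * Qc) * ((-1)^gt * (\<Prod>x\<in>#R'. (r - x))) > 0" using qs sg by (rule mult_pos_pos)
  ultimately show "(-1)^(ltc L r) * (K$1$1 - f 0 * K$1$2) < 0" unfolding ltL by (rule neg_of_mult)
qed

end


lemma neg1_pow_neg: "((-1::real)^n < 0) \<longleftrightarrow> odd n"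
  by (cases "even n") auto

lemma cnt12: "j < length L \<Longrightarrow> count (mset L) (L ! j) \<le> 2 \<Longrightarrow> count (mset L) (L ! j) \<noteq> 1 \<Longrightarrow>
   count (mset L) (L ! j) = 2"
  using count_pos[of j L] by linarith

context slp begin

lemma main:
  assumes dK: "det K = 1" and c: "K$1$1 - f 0 * K$1$2 > 0" and hp: "(\<Prod>i = 0..N - 1. 1 / f i) > 0"
  shows "conclusions N f q w K"
proof -
  have dM: "det (- K) = 1" using dK by (simp add: det_2)
  have cM: "(- K)$1$1 - f 0 * (- K)$1$2 = - (K$1$1 - f 0 * K$1$2)" by simp
  have cM0: "(- K)$1$1 - f 0 * (- K)$1$2 \<noteq> 0" using c cM by simp
  have c0: "K$1$1 - f 0 * K$1$2 \<noteq> 0" using c by simp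
  define LP where "LP = sorted_list_of_multiset (proots (Pk K))"
  define LM where "LM = sorted_list_of_multiset (proots (Pk (- K)))"
  note P = side_facts[OF dK c0 hp, folded LP_def]
  note M = side_facts[OF dM cM0 hp, folded LM_def]
  have parP: "count (mset LP) x = 2 \<Longrightarrow> odd (ltc LP x)" for x
  proof -
    assume "count (mset LP) x = 2"
    from P(6)[OF this] have "(-1)^(ltc LP x) * (K$1$1 - f 0 * K$1$2) < 0" .
    then have "(-1::real)^(ltc LP x) < 0" using c by (rule neg_of_mult)
    then show ?thesis by (simp add: neg1_pow_neg)
  qed
  have parM: "count (mset LM) x = 2 \<Longrightarrow> even (ltc LM x)" for x
  proof -
    assume "count (mset LM) x = 2"
    from M(6)[OF this] have "(-1)^(ltc LM x) * (- (K$1$1 - f 0 * K$1$2)) < 0" unfolding cM .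
    then have "(-1::real)^(ltc LM x) * (K$1$1 - f 0 * K$1$2) > 0"
      using mult_minus_right[of "(-1::real)^(ltc LM x)" "K$1$1 - f 0 * K$1$2"] by linarith
    then have pos: "(-1::real)^(ltc LM x) > 0" using c by (simp add: zero_less_mult_iff)
    show ?thesis
    proof (rule ccontr)
      assume "odd (ltc LM x)"
      then have "(-1::real)^(ltc LM x) = -1" by simp
      then show False using pos by simp
    qed
  qed
  have lP: "length LP = N" and lM: "length LM = N" using P(3) M(3) .
  have sP: "sorted LP" and sM: "sorted LM" using P(4) M(4) .
  have N1: "N = Suc (N - 1)" using N2 by simp
  have c1: "count (mset LP) (LP ! 0) = 1"
  proof (rule ccontr)
    assume "count (mset LP) (LP ! 0) \<noteq> 1"
    then have "count (mset LP) (LP ! 0) = 2" using cnt12[of 0 LP] P(5) lP N2 by auto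
    then have "odd (ltc LP (LP ! 0))" by (rule parP)
    moreover have "ltc LP (LP ! 0) = 0" using H0[OF sP] lP N2 by simp
    ultimately show False by simp
  qed
  have c2: "count (mset LP) (LP ! j) = 1 \<and> count (mset LP) (LP ! (j + 1)) = 1"
    if j: "odd j" "1 \<le> j" "j \<le> N - 2" "LP ! j < LP ! (j + 1)" for j
  proof
    have jl: "Suc j < length LP" using j lP N2 by simp
    show "count (mset LP) (LP ! j) = 1"
    proof (rule ccontr)
      assume "count (mset LP) (LP ! j) \<noteq> 1"
      then have d: "count (mset LP) (LP ! j) = 2" using cnt12[of j LP] P(5) jl by auto
      have "ltc LP (LP ! j) + 1 = j" using H1[OF sP jl _ d] j by simp
      then show False using parP[OF d] j by presburger
    qed
    show "count (mset LP) (LP ! (j + 1)) = 1"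
    proof (rule ccontr)
      assume "count (mset LP) (LP ! (j + 1)) \<noteq> 1"
      then have d: "count (mset LP) (LP ! (j + 1)) = 2" using cnt12[of "j + 1" LP] P(5) jl by auto
      have "ltc LP (LP ! Suc j) = Suc j" using H2[OF sP jl] j by simp
      then show False using parP[OF d] j by simp
    qed
  qed
  have c3: "count (mset LM) (LM ! j) = 1 \<and> count (mset LM) (LM ! (j + 1)) = 1"
    if j: "even j" "j \<le> N - 2" "LM ! j < LM ! (j + 1)" for j
  proof
    have jl: "Suc j < length LM" using j lM N2 by simp
    show "count (mset LM) (LM ! j) = 1"
    proof (rule ccontr)
      assume "count (mset LM) (LM ! j) \<noteq> 1"
      then have d: "count (mset LM) (LM ! j) = 2" using cnt12[of j LM] M(5) jl by auto
      have "ltc LM (LM ! j) + 1 = j" using H1[OF sM jl _ d] j by simp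
      then show False using parM[OF d] j by presburger
    qed
    show "count (mset LM) (LM ! (j + 1)) = 1"
    proof (rule ccontr)
      assume "count (mset LM) (LM ! (j + 1)) \<noteq> 1"
      then have d: "count (mset LM) (LM ! (j + 1)) = 2" using cnt12[of "j + 1" LM] M(5) jl by auto
      have "ltc LM (LM ! Suc j) = Suc j" using H2[OF sM jl] j by simp
      then show False using parM[OF d] j by simp
    qed
  qed
  have c4: "count (mset LM) (LM ! (N - 1)) = 1" if "odd N"
  proof (rule ccontr)
    assume "count (mset LM) (LM ! (N - 1)) \<noteq> 1"
    then have d: "count (mset LM) (LM ! (N - 1)) = 2" using cnt12[of "N - 1" LM] M(5) lM N2 by auto
    have "ltc LM (LM ! (N - 1)) + 2 = Suc (N - 1)" using H3[OF sM _ d] lM N1 by simp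
    then show False using parM[OF d] that N2 by presburger
  qed
  have c5: "count (mset LP) (LP ! (N - 1)) = 1" if "even N"
  proof (rule ccontr)
    assume "count (mset LP) (LP ! (N - 1)) \<noteq> 1"
    then have d: "count (mset LP) (LP ! (N - 1)) = 2" using cnt12[of "N - 1" LP] P(5) lP N2 by auto
    have "ltc LP (LP ! (N - 1)) + 2 = Suc (N - 1)" using H3[OF sP _ d] lP N1 by simp
    then show False using parP[OF d] that N2 by presburger
  qed
  show ?thesis
    unfolding conclusions_def Let_def P(1) M(1) P(2) M(2)
    using P(7) M(7) c1 c2 c3 c4 c5 by auto
qed

end

theorem corollary3p3:
  fixes N :: nat and f q w :: "nat \<Rightarrow> real" and K :: "real^2^2"
  assumes "N \<ge> 2"
    and "\<And>n. n \<le> N \<Longrightarrow> f n \<noteq> 0"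
    and "\<And>n. 1 \<le> n \<Longrightarrow> n \<le> N \<Longrightarrow> w n > 0"
    and "(\<Prod>i = 0..N - 1. 1 / f i) > 0"
    and "det K = 1"
  shows "(K $ 1 $ 1 - f 0 * K $ 1 $ 2 > 0 \<longrightarrow> conclusions N f q w K) \<and>
         (K $ 1 $ 1 - f 0 * K $ 1 $ 2 < 0 \<longrightarrow> conclusions N f q w (- K))"
proof -
  interpret slp N f q w using assms(1-3) by unfold_locales auto
  have dM: "det (- K) = 1" using assms(5) by (simp add: det_2)
  show ?thesis
  proof (intro conjI impI)
    assume "K $ 1 $ 1 - f 0 * K $ 1 $ 2 > 0"
    then show "conclusions N f q w K" by (rule main[OF assms(5) _ assms(4)])
  next
    assume "K $ 1 $ 1 - f 0 * K $ 1 $ 2 < 0"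
    then have "(- K) $ 1 $ 1 - f 0 * (- K) $ 1 $ 2 > 0" by simp
    then show "conclusions N f q w (- K)" by (rule main[OF dM _ assms(4)])
  qed
qed

end
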